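(* Let $(M^n,g)$ be a Riemannian manifold with Levi-Civita connection $\nabla$, and let $K_{bcd}{}^e$ be a $(1,3)$-tensor field satisfying $$\nabla_m K_{bce}{}^m = A\, \nabla_m R_{bce}{}^m + B\,(a_{be}\nabla_c \varphi- a_{ce}\nabla_b\varphi)$$ with nonzero constants $A,B$, a smooth function $\varphi$ and a symmetric Codazzi tensor $a_{bc}$. Suppose $M$ is $K$-recurrent: $\nabla_a K_{bcd}{}^e =\lambda_a K_{bcd}{}^e$ for a nonzero covector field $\lambda$, and suppose $\lambda$ is closed ($\nabla_a\lambda_b=\nabla_b\lambda_a$). Define $B_{abcd}{}^e = \nabla_a K_{bcd}{}^e +\nabla_b K_{cad}{}^e +\nabla_c K_{abd}{}^e$. Then $$R_{am}R_{bce}{}^m + R_{bm}R_{cae}{}^m + R_{cm}R_{abe}{}^m =\frac{1}{A}\nabla_m B_{abce}{}^m .$$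
   Context: Abstract index notation with Einstein summation. $R_{abc}{}^d = \partial_a \Gamma_{bc}^d - \partial_b\Gamma_{ac}^d - \Gamma_{ac}^k\Gamma_{bk}^d + \Gamma_{ak}^d \Gamma_{bc}^k$, $R_{ac}=R_{abc}{}^b$. A Codazzi tensor is a symmetric $(0,2)$ tensor with $\nabla_b a_{cd}=\nabla_c a_{bd}$. *)

theory Defs
  imports "HOL-Analysis.Analysis"
begin

text \<open>Local coordinate calculus on an open chart domain U of R^n (index type 'n).
 Tensor components are real-valued functions of the point; abstract indices become
 coordinate indices of type 'n, Einstein summation becomes explicit sums over UNIV.\<close>

definition pd :: "'n::finite \<Rightarrow> (real^'n \<Rightarrow> real) \<Rightarrow> real^'n \<Rightarrow> real" where
  "pd i f x = frechet_derivative f (at x) (axis i 1)"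

definition smooth_on :: "(real^'n::finite \<Rightarrow> real) \<Rightarrow> (real^'n) set \<Rightarrow> bool" where
  "smooth_on f U \<longleftrightarrow> (\<forall>is::'n list. \<forall>x\<in>U. (foldr pd is f) differentiable (at x))"

definition riemannian_metric :: "(real^'n::finite \<Rightarrow> 'n \<Rightarrow> 'n \<Rightarrow> real) \<Rightarrow> (real^'n) set \<Rightarrow> bool" where
  "riemannian_metric g U \<longleftrightarrow>
     (\<forall>i j. smooth_on (\<lambda>x. g x i j) U) \<and>
     (\<forall>x\<in>U. \<forall>i j. g x i j = g x j i) \<and>
     (\<forall>x\<in>U. \<forall>v::real^'n. v \<noteq> 0 \<longrightarrow> (\<Sum>i\<in>UNIV. \<Sum>j\<in>UNIV. g x i j * v$i * v$j) > 0)"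

definition ginv :: "(real^'n::finite \<Rightarrow> 'n \<Rightarrow> 'n \<Rightarrow> real) \<Rightarrow> real^'n \<Rightarrow> 'n \<Rightarrow> 'n \<Rightarrow> real" where
  "ginv g x i j = matrix_inv (\<chi> k l. g x k l) $ i $ j"

text \<open>Christoffel symbols of the Levi-Civita connection: Christoffel g x b c d = Gamma_{bc}^d.\<close>
definition Christoffel :: "(real^'n::finite \<Rightarrow> 'n \<Rightarrow> 'n \<Rightarrow> real) \<Rightarrow> real^'n \<Rightarrow> 'n \<Rightarrow> 'n \<Rightarrow> 'n \<Rightarrow> real" where
  "Christoffel g x b c d = (1/2) * (\<Sum>e\<in>UNIV. ginv g x d e *
      (pd b (\<lambda>y. g y c e) x + pd c (\<lambda>y. g y b e) x - pd e (\<lambda>y. g y b c) x))"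

text \<open>Riemann tensor R_{abc}^d = Riem g x a b c d, with the convention of the paper.\<close>
definition Riem :: "(real^'n::finite \<Rightarrow> 'n \<Rightarrow> 'n \<Rightarrow> real) \<Rightarrow> real^'n \<Rightarrow> 'n \<Rightarrow> 'n \<Rightarrow> 'n \<Rightarrow> 'n \<Rightarrow> real" where
  "Riem g x a b c d =
     pd a (\<lambda>y. Christoffel g y b c d) x - pd b (\<lambda>y. Christoffel g y a c d) x
     - (\<Sum>k\<in>UNIV. Christoffel g x a c k * Christoffel g x b k d)
     + (\<Sum>k\<in>UNIV. Christoffel g x a k d * Christoffel g x b c k)"

definition Ric :: "(real^'n::finite \<Rightarrow> 'n \<Rightarrow> 'n \<Rightarrow> real) \<Rightarrow> real^'n \<Rightarrow> 'n \<Rightarrow> 'n \<Rightarrow> real" where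
  "Ric g x a c = (\<Sum>b\<in>UNIV. Riem g x a b c b)"

text \<open>General tensor fields: T x ls us is the component with lower indices ls and upper
 indices us. Covariant derivative nabla g T x a ls us = nabla_a T_{ls}^{us}.\<close>
definition nabla :: "(real^'n::finite \<Rightarrow> 'n \<Rightarrow> 'n \<Rightarrow> real) \<Rightarrow> (real^'n \<Rightarrow> 'n list \<Rightarrow> 'n list \<Rightarrow> real)
                      \<Rightarrow> real^'n \<Rightarrow> 'n \<Rightarrow> 'n list \<Rightarrow> 'n list \<Rightarrow> real" where
  "nabla g T x a ls us =
     pd a (\<lambda>y. T y ls us) x
     - (\<Sum>i<length ls. \<Sum>k\<in>UNIV. Christoffel g x a (ls!i) k * T x (ls[i:=k]) us)
     + (\<Sum>j<length us. \<Sum>k\<in>UNIV. Christoffel g x a k (us!j) * T x ls (us[j:=k]))"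

definition T00 :: "(real^'n::finite \<Rightarrow> real) \<Rightarrow> real^'n \<Rightarrow> 'n list \<Rightarrow> 'n list \<Rightarrow> real" where
  "T00 f x ls us = f x"
definition T01 :: "(real^'n::finite \<Rightarrow> 'n \<Rightarrow> real) \<Rightarrow> real^'n \<Rightarrow> 'n list \<Rightarrow> 'n list \<Rightarrow> real" where
  "T01 f x ls us = f x (ls!0)"
definition T02 :: "(real^'n::finite \<Rightarrow> 'n \<Rightarrow> 'n \<Rightarrow> real) \<Rightarrow> real^'n \<Rightarrow> 'n list \<Rightarrow> 'n list \<Rightarrow> real" where
  "T02 f x ls us = f x (ls!0) (ls!1)"
definition T13 :: "(real^'n::finite \<Rightarrow> 'n \<Rightarrow> 'n \<Rightarrow> 'n \<Rightarrow> 'n \<Rightarrow> real) \<Rightarrow> real^'n \<Rightarrow> 'n list \<Rightarrow> 'n list \<Rightarrow> real" where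
  "T13 f x ls us = f x (ls!0) (ls!1) (ls!2) (us!0)"
definition T14 :: "(real^'n::finite \<Rightarrow> 'n \<Rightarrow> 'n \<Rightarrow> 'n \<Rightarrow> 'n \<Rightarrow> 'n \<Rightarrow> real) \<Rightarrow> real^'n \<Rightarrow> 'n list \<Rightarrow> 'n list \<Rightarrow> real" where
  "T14 f x ls us = f x (ls!0) (ls!1) (ls!2) (ls!3) (us!0)"

definition nabla13 :: "(real^'n::finite \<Rightarrow> 'n \<Rightarrow> 'n \<Rightarrow> real) \<Rightarrow> (real^'n \<Rightarrow> 'n \<Rightarrow> 'n \<Rightarrow> 'n \<Rightarrow> 'n \<Rightarrow> real)
     \<Rightarrow> real^'n \<Rightarrow> 'n \<Rightarrow> 'n \<Rightarrow> 'n \<Rightarrow> 'n \<Rightarrow> 'n \<Rightarrow> real" where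
  "nabla13 g K x a b c d e = nabla g (T13 K) x a [b, c, d] [e]"

definition Btens :: "(real^'n::finite \<Rightarrow> 'n \<Rightarrow> 'n \<Rightarrow> real) \<Rightarrow> (real^'n \<Rightarrow> 'n \<Rightarrow> 'n \<Rightarrow> 'n \<Rightarrow> 'n \<Rightarrow> real)
     \<Rightarrow> real^'n \<Rightarrow> 'n \<Rightarrow> 'n \<Rightarrow> 'n \<Rightarrow> 'n \<Rightarrow> 'n \<Rightarrow> real" where
  "Btens g K x a b c d e = nabla13 g K x a b c d e + nabla13 g K x b c a d e + nabla13 g K x c a b d e"

end

theory Submission
  imports Defs
begin


lemma pd_local:
  assumes "open U" "x \<in> U" "\<And>y. y \<in> U \<Longrightarrow> f y = h y"
  shows "pd i f x = pd i h x"
proof -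
  have "(\<lambda>f'. (f has_derivative f') (at x)) = (\<lambda>f'. (h has_derivative f') (at x))"
    using has_derivative_transform_within_open[OF _ assms(1,2)] assms(3) by (metis)
  then show ?thesis unfolding pd_def frechet_derivative_def by simp
qed

lemma diff_local:
  assumes "open U" "x \<in> U" "\<And>y. y \<in> U \<Longrightarrow> f y = h y" "f differentiable (at x)"
  shows "h differentiable (at x)"
proof -
  obtain D where "(f has_derivative D) (at x)" using assms(4) unfolding differentiable_def by blast
  then have "(h has_derivative D) (at x)"
    by (rule has_derivative_transform_within_open[OF _ assms(1,2)]) (use assms(3) in auto)
  then show ?thesis unfolding differentiable_def by blast
qed

lemma foldr_pd_local:
  assumes "open U" "\<And>y. y \<in> U \<Longrightarrow> f y = h y" 
  shows "y \<in> U \<Longrightarrow> foldr pd is f y = foldr pd is h y"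
  using assms(2) by (induction "is" arbitrary: y) (auto intro!: pd_local[OF assms(1)])

definition sm :: "(real^'n::finite) set \<Rightarrow> nat \<Rightarrow> (real^'n \<Rightarrow> real) \<Rightarrow> bool" where
  "sm U n f \<longleftrightarrow> (\<forall>is::'n list. length is \<le> n \<longrightarrow> (\<forall>x\<in>U. foldr pd is f differentiable (at x)))"

lemma smooth_sm: "smooth_on f U \<longleftrightarrow> (\<forall>n. sm U n f)"
  unfolding smooth_on_def sm_def by auto

lemma foldr_snoc: "foldr pd (is @ [i]) f = foldr pd is (pd i f)"
  by simp

lemma sm_Suc: "sm U (Suc n) f \<longleftrightarrow> (\<forall>x\<in>U. f differentiable (at x)) \<and> (\<forall>i. sm U n (pd i f))"
proof
  assume a: "sm U (Suc n) f"
  show "(\<forall>x\<in>U. f differentiable (at x)) \<and> (\<forall>i. sm U n (pd i f))"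
  proof
    show "\<forall>x\<in>U. f differentiable (at x)" using a[unfolded sm_def, rule_format, of "[]"] by simp
    show "\<forall>i. sm U n (pd i f)" unfolding sm_def
    proof (intro allI impI)
      fix i and "is" :: "'a list" assume "length is \<le> n"
      then show "\<forall>x\<in>U. foldr pd is (pd i f) differentiable at x"
        using a[unfolded sm_def, rule_format, of "is @ [i]"] by simp
    qed
  qed
next
  assume a: "(\<forall>x\<in>U. f differentiable (at x)) \<and> (\<forall>i. sm U n (pd i f))"
  show "sm U (Suc n) f" unfolding sm_def
  proof (intro allI impI)
    fix "is" :: "'a list" assume l: "length is \<le> Suc n"
    show "\<forall>x\<in>U. foldr pd is f differentiable at x"
    proof (cases "is" rule: rev_cases)
      case Nil then show ?thesis using a by simp
    next
      case (snoc ys i)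
      then have "length ys \<le> n" using l by simp
      then have "\<forall>x\<in>U. foldr pd ys (pd i f) differentiable at x"
        using a unfolding sm_def by blast
      then show ?thesis using snoc by simp
    qed
  qed
qed

lemma sm_0: "sm U 0 f \<longleftrightarrow> (\<forall>x\<in>U. f differentiable (at x))"
proof
  assume s: "sm U 0 f"
  have "length ([]::'a list) \<le> 0" by simp
  with s have "\<forall>x\<in>U. foldr pd ([]::'a list) f differentiable at x" unfolding sm_def by blast
  then show "\<forall>x\<in>U. f differentiable (at x)" by simp
next
  assume a: "\<forall>x\<in>U. f differentiable (at x)"
  show "sm U 0 f" unfolding sm_def
  proof (intro allI impI)
    fix "is" :: "'a list" assume "length is \<le> 0"
    then have "is = []" by simp
    then show "\<forall>x\<in>U. foldr pd is f differentiable at x" using a by simp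
  qed
qed

lemma sm_mono: "sm U n f \<Longrightarrow> m \<le> n \<Longrightarrow> sm U m f"
  unfolding sm_def by auto

lemma sm_local:
  assumes "open U" "\<And>y. y \<in> U \<Longrightarrow> f y = h y" "sm U n f"
  shows "sm U n h"
  unfolding sm_def
proof (intro allI impI ballI)
  fix "is" :: "'a list" and x assume l: "length is \<le> n" and x: "x \<in> U"
  have d: "foldr pd is f differentiable at x" using assms(3) l x unfolding sm_def by blast
  show "foldr pd is h differentiable at x"
    by (rule diff_local[OF assms(1) x _ d]) (rule foldr_pd_local[OF assms(1,2)])
qed

lemma pd_has: "f differentiable (at x) \<Longrightarrow> (f has_derivative (\<lambda>v. frechet_derivative f (at x) v)) (at x)"
  using frechet_derivative_works by auto

lemma pd_add: "f differentiable (at x) \<Longrightarrow> h differentiable (at x) \<Longrightarrow>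
   pd i (\<lambda>y. f y + h y) x = pd i f x + pd i h x"
proof -
  assume a: "f differentiable (at x)" "h differentiable (at x)"
  have "((\<lambda>y. f y + h y) has_derivative (\<lambda>v. frechet_derivative f (at x) v + frechet_derivative h (at x) v)) (at x)"
    by (rule has_derivative_add[OF a(1)[unfolded frechet_derivative_works] a(2)[unfolded frechet_derivative_works]])
  from frechet_derivative_at[OF this, symmetric] show ?thesis unfolding pd_def by simp
qed

lemma pd_diff: "f differentiable (at x) \<Longrightarrow> h differentiable (at x) \<Longrightarrow>
   pd i (\<lambda>y. f y - h y) x = pd i f x - pd i h x"
proof -
  assume a: "f differentiable (at x)" "h differentiable (at x)"
  have "((\<lambda>y. f y - h y) has_derivative (\<lambda>v. frechet_derivative f (at x) v - frechet_derivative h (at x) v)) (at x)"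
    by (rule has_derivative_diff[OF a(1)[unfolded frechet_derivative_works] a(2)[unfolded frechet_derivative_works]])
  from frechet_derivative_at[OF this, symmetric] show ?thesis unfolding pd_def by simp
qed

lemma pd_mult: "f differentiable (at x) \<Longrightarrow> h differentiable (at x) \<Longrightarrow>
   pd i (\<lambda>y. f y * h y) x = pd i f x * h x + f x * pd i h x"
proof -
  assume a: "f differentiable (at x)" "h differentiable (at x)"
  have "((\<lambda>y. f y * h y) has_derivative (\<lambda>v. f x * frechet_derivative h (at x) v + frechet_derivative f (at x) v * h x)) (at x)"
    using has_derivative_mult[OF a(1)[unfolded frechet_derivative_works] a(2)[unfolded frechet_derivative_works]] by simp
  from frechet_derivative_at[OF this, symmetric] show ?thesis unfolding pd_def by (simp add: add.commute)
qed

lemma pd_const: "pd i (\<lambda>y. c) x = 0"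
  unfolding pd_def by simp

lemma pd_sum: "finite S \<Longrightarrow> (\<And>k. k \<in> S \<Longrightarrow> F k differentiable (at x)) \<Longrightarrow>
   pd i (\<lambda>y. \<Sum>k\<in>S. F k y) x = (\<Sum>k\<in>S. pd i (F k) x)"
proof (induction S rule: finite_induct)
  case empty then show ?case by (simp add: pd_const)
next
  case (insert a S)
  have d: "(\<lambda>y. \<Sum>k\<in>S. F k y) differentiable (at x)"
    using insert by (intro differentiable_sum) auto
  have "pd i (\<lambda>y. \<Sum>k\<in>insert a S. F k y) x = pd i (\<lambda>y. F a y + (\<Sum>k\<in>S. F k y)) x"
    using insert by simp
  also have "\<dots> = pd i (F a) x + pd i (\<lambda>y. \<Sum>k\<in>S. F k y) x"
    using pd_add[of "F a" x "\<lambda>y. \<Sum>k\<in>S. F k y"] d insert by simp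
  finally show ?case using insert by simp
qed

lemma pd_cmult: "f differentiable (at x) \<Longrightarrow> pd i (\<lambda>y. c * f y) x = c * pd i f x"
  using pd_mult[of "\<lambda>y. c" x f i] by (simp add: pd_const)

lemma diff_inverse: fixes f :: "'a::real_normed_vector \<Rightarrow> real" shows "f differentiable (at x) \<Longrightarrow> f x \<noteq> 0 \<Longrightarrow> (\<lambda>y. inverse (f y)) differentiable (at x)"
proof -
  assume a: "f differentiable (at x)" "f x \<noteq> 0"
  then obtain D where "(f has_derivative D) (at x)" unfolding differentiable_def by blast
  from Deriv.has_derivative_inverse[OF a(2) this] show ?thesis unfolding differentiable_def by blast
qed

lemma pd_inverse: "f differentiable (at x) \<Longrightarrow> f x \<noteq> 0 \<Longrightarrow>
   pd i (\<lambda>y. inverse (f y)) x = - (pd i f x * inverse (f x) * inverse (f x))"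
proof -
  assume a: "f differentiable (at x)" "f x \<noteq> 0"
  have "((\<lambda>y. inverse (f y)) has_derivative (\<lambda>v. - (inverse (f x) * frechet_derivative f (at x) v * inverse (f x)))) (at x)"
    using Deriv.has_derivative_inverse[OF a(2) a(1)[unfolded frechet_derivative_works]] by simp
  from frechet_derivative_at[OF this, symmetric] show ?thesis unfolding pd_def by (simp add: algebra_simps)
qed


context fixes U :: "(real^'n::finite) set" assumes U: "open U"
begin

lemma sm_local2: "sm U n f \<Longrightarrow> (\<And>y. y \<in> U \<Longrightarrow> h y = f y) \<Longrightarrow> sm U n h"
  using sm_local[OF U, of f h n] by simp

lemma sm_const: "sm U n (\<lambda>y. c)"
proof (induction n arbitrary: c)
  case 0 then show ?case by (simp add: sm_0)
next
  case (Suc n)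
  have e: "pd i (\<lambda>y. c) = (\<lambda>y. 0)" for i by (rule ext) (simp add: pd_const)
  show ?case using Suc.IH by (simp add: sm_Suc e)
qed

lemma sm_add: "sm U n f \<Longrightarrow> sm U n h \<Longrightarrow> sm U n (\<lambda>y. f y + h y)"
proof (induction n arbitrary: f h)
  case 0 then show ?case by (auto simp: sm_0)
next
  case (Suc n)
  have d: "\<forall>x\<in>U. f x = f x \<and> f differentiable (at x) \<and> h differentiable (at x)" using Suc.prems by (simp add: sm_Suc)
  show ?case unfolding sm_Suc
  proof (intro conjI allI ballI)
    fix x assume "x \<in> U" then show "(\<lambda>y. f y + h y) differentiable at x" using d by auto
  next
    fix i
    have "sm U n (\<lambda>y. pd i f y + pd i h y)" using Suc by (simp add: sm_Suc)
    then show "sm U n (pd i (\<lambda>y. f y + h y))"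
      by (rule sm_local2) (use d in \<open>auto intro!: pd_add\<close>)
  qed
qed

lemma sm_minus: "sm U n f \<Longrightarrow> sm U n (\<lambda>y. - f y)"
proof (induction n arbitrary: f)
  case 0 then show ?case by (auto simp: sm_0 differentiable_minus)
next
  case (Suc n)
  have d: "\<forall>x\<in>U. f differentiable (at x)" using Suc.prems by (simp add: sm_Suc)
  show ?case unfolding sm_Suc
  proof (intro conjI allI ballI)
    fix x assume "x \<in> U" then show "(\<lambda>y. - f y) differentiable at x" using d by (auto intro: differentiable_minus)
  next
    fix i
    have "sm U n (\<lambda>y. - pd i f y)" using Suc by (simp add: sm_Suc)
    moreover have "pd i (\<lambda>y. - f y) y = - pd i f y" if "y \<in> U" for y
      using pd_diff[of "\<lambda>_. 0" y f i] d that by (simp add: pd_const)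
    ultimately show "sm U n (pd i (\<lambda>y. - f y))"
      by (rule sm_local2) auto
  qed
qed

lemma sm_diff: "sm U n f \<Longrightarrow> sm U n h \<Longrightarrow> sm U n (\<lambda>y. f y - h y)"
  using sm_add[of n f "\<lambda>y. - h y"] sm_minus[of n h] by simp

lemma sm_mult: "sm U n f \<Longrightarrow> sm U n h \<Longrightarrow> sm U n (\<lambda>y. f y * h y)"
proof (induction n arbitrary: f h)
  case 0 then show ?case by (auto simp: sm_0 differentiable_mult)
next
  case (Suc n)
  have d: "\<forall>x\<in>U. f differentiable (at x) \<and> h differentiable (at x)" using Suc.prems by (simp add: sm_Suc)
  show ?case unfolding sm_Suc
  proof (intro conjI allI ballI)
    fix x assume "x \<in> U" then show "(\<lambda>y. f y * h y) differentiable at x" using d by (auto intro: differentiable_mult)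
  next
    fix i
    have fn: "sm U n f" and hn: "sm U n h" using Suc.prems sm_mono[where n="Suc n" and m=n] by auto
    have pf: "sm U n (pd i f)" "sm U n (pd i h)" using Suc.prems by (auto simp: sm_Suc)
    have "sm U n (\<lambda>y. pd i f y * h y + f y * pd i h y)"
      using sm_add[OF Suc.IH[OF pf(1) hn] Suc.IH[OF fn pf(2)]] .
    then show "sm U n (pd i (\<lambda>y. f y * h y))"
      by (rule sm_local2) (use d in \<open>auto intro!: pd_mult\<close>)
  qed
qed

lemma sm_inverse: "sm U n f \<Longrightarrow> (\<forall>y\<in>U. f y \<noteq> 0) \<Longrightarrow> sm U n (\<lambda>y. inverse (f y))"
proof (induction n arbitrary: f)
  case 0 then show ?case unfolding sm_0 by (simp add: diff_inverse)
next
  case (Suc n)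
  have d: "\<forall>x\<in>U. f differentiable (at x)" using Suc.prems by (simp add: sm_Suc)
  have fn: "sm U n f" using Suc.prems(1) sm_mono[where n="Suc n" and m=n] by simp
  have inv: "sm U n (\<lambda>y. inverse (f y))" using Suc.IH[OF fn Suc.prems(2)] .
  show ?case unfolding sm_Suc
  proof (intro conjI allI ballI)
    fix x assume "x \<in> U" then show "(\<lambda>y. inverse (f y)) differentiable at x"
      using d Suc.prems by (simp add: diff_inverse)
  next
    fix i
    have "sm U n (\<lambda>y. - (pd i f y * inverse (f y) * inverse (f y)))"
      using Suc.prems inv by (intro sm_minus sm_mult) (auto simp: sm_Suc)
    then show "sm U n (pd i (\<lambda>y. inverse (f y)))"
      by (rule sm_local2) (use d Suc.prems in \<open>auto intro!: pd_inverse\<close>)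
  qed
qed

lemma sm_pd: "sm U (Suc n) f \<Longrightarrow> sm U n (pd i f)"
  by (simp add: sm_Suc)

lemma sm_sum: "finite S \<Longrightarrow> (\<And>k. k \<in> S \<Longrightarrow> sm U n (F k)) \<Longrightarrow> sm U n (\<lambda>y. \<Sum>k\<in>S. F k y)"
  by (induction S rule: finite_induct) (auto intro: sm_add sm_const)

lemma sm_prod: "finite S \<Longrightarrow> (\<And>k. k \<in> S \<Longrightarrow> sm U n (F k)) \<Longrightarrow> sm U n (\<lambda>y. \<Prod>k\<in>S. F k y)"
  by (induction S rule: finite_induct) (auto intro: sm_mult sm_const)

lemma smooth_const: "smooth_on (\<lambda>y. c) U" by (simp add: smooth_sm sm_const)
lemma smooth_add: "smooth_on f U \<Longrightarrow> smooth_on h U \<Longrightarrow> smooth_on (\<lambda>y. f y + h y) U"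
  by (simp add: smooth_sm sm_add)
lemma smooth_diff: "smooth_on f U \<Longrightarrow> smooth_on h U \<Longrightarrow> smooth_on (\<lambda>y. f y - h y) U"
  by (simp add: smooth_sm sm_diff)
lemma smooth_minus: "smooth_on f U \<Longrightarrow> smooth_on (\<lambda>y. - f y) U"
  by (simp add: smooth_sm sm_minus)
lemma smooth_mult: "smooth_on f U \<Longrightarrow> smooth_on h U \<Longrightarrow> smooth_on (\<lambda>y. f y * h y) U"
  by (simp add: smooth_sm sm_mult)
lemma smooth_inverse: "smooth_on f U \<Longrightarrow> (\<forall>y\<in>U. f y \<noteq> 0) \<Longrightarrow> smooth_on (\<lambda>y. inverse (f y)) U"
  by (simp add: smooth_sm sm_inverse)
lemma smooth_pd: "smooth_on f U \<Longrightarrow> smooth_on (pd i f) U"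
  by (meson smooth_sm sm_pd)
lemma smooth_sum: "finite S \<Longrightarrow> (\<And>k. k \<in> S \<Longrightarrow> smooth_on (F k) U) \<Longrightarrow> smooth_on (\<lambda>y. \<Sum>k\<in>S. F k y) U"
  by (simp add: smooth_sm sm_sum)
lemma smooth_prod: "finite S \<Longrightarrow> (\<And>k. k \<in> S \<Longrightarrow> smooth_on (F k) U) \<Longrightarrow> smooth_on (\<lambda>y. \<Prod>k\<in>S. F k y) U"
  by (simp add: smooth_sm sm_prod)
lemma smooth_diffble: "smooth_on f U \<Longrightarrow> x \<in> U \<Longrightarrow> f differentiable (at x)"
  unfolding smooth_on_def by (drule spec[of _ "[]"]) simp
lemma smooth_local: "smooth_on f U \<Longrightarrow> (\<And>y. y \<in> U \<Longrightarrow> f y = h y) \<Longrightarrow> smooth_on h U"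
  by (meson smooth_sm sm_local[OF U])
lemma smooth_divide: "smooth_on f U \<Longrightarrow> smooth_on h U \<Longrightarrow> (\<forall>y\<in>U. h y \<noteq> 0) \<Longrightarrow> smooth_on (\<lambda>y. f y / h y) U"
  using smooth_mult[OF _ smooth_inverse] by (simp add: divide_inverse)

end


lemma line_deriv:
  fixes g :: "'a::real_normed_vector \<Rightarrow> real"
  assumes "g differentiable (at (q + s *\<^sub>R w))"
  shows "((\<lambda>s. g (q + s *\<^sub>R w)) has_real_derivative frechet_derivative g (at (q + s *\<^sub>R w)) w) (at s)"
proof -
  have l: "linear (frechet_derivative g (at (q + s *\<^sub>R w)))"
    using assms by (rule linear_frechet_derivative)
  have h1: "((\<lambda>s. q + s *\<^sub>R w) has_derivative (\<lambda>h. h *\<^sub>R w)) (at s)"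
    by (auto intro!: derivative_eq_intros)
  have "((\<lambda>s. g (q + s *\<^sub>R w)) has_derivative (\<lambda>h. frechet_derivative g (at (q + s *\<^sub>R w)) (h *\<^sub>R w))) (at s)"
    using has_derivative_compose[OF h1 assms[unfolded frechet_derivative_works]] by simp
  moreover have "(\<lambda>h. frechet_derivative g (at (q + s *\<^sub>R w)) (h *\<^sub>R w)) = (\<lambda>h. frechet_derivative g (at (q + s *\<^sub>R w)) w * h)"
    using l by (auto simp: linear_scale mult.commute)
  ultimately show ?thesis unfolding has_field_derivative_def by simp
qed

lemma route:
  fixes f :: "'a::real_normed_vector \<Rightarrow> real"
  assumes t: "t > 0"
    and dd: "\<And>a b. 0 \<le> a \<Longrightarrow> a \<le> t \<Longrightarrow> 0 \<le> b \<Longrightarrow> b \<le> t \<Longrightarrow>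
        f differentiable (at (x + a *\<^sub>R u + b *\<^sub>R v)) \<and>
        (\<lambda>p. frechet_derivative f (at p) u) differentiable (at (x + a *\<^sub>R u + b *\<^sub>R v))"
  shows "\<exists>a b. 0 < a \<and> a < t \<and> 0 < b \<and> b < t \<and>
    f (x + t *\<^sub>R u + t *\<^sub>R v) - f (x + t *\<^sub>R u) - f (x + t *\<^sub>R v) + f x =
    t * t * frechet_derivative (\<lambda>p. frechet_derivative f (at p) u) (at (x + a *\<^sub>R u + b *\<^sub>R v)) v"
proof -
  define F where "F = (\<lambda>p. frechet_derivative f (at p) u)"
  define \<phi> where "\<phi> = (\<lambda>s. f ((x + t *\<^sub>R v) + s *\<^sub>R u) - f (x + s *\<^sub>R u))"
  have "\<exists>z. 0 < z \<and> z < t \<and> \<phi> t - \<phi> 0 = (t - 0) * (F (x + t *\<^sub>R v + z *\<^sub>R u) - F (x + z *\<^sub>R u))"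
  proof (rule MVT2[OF t])
    fix s :: real assume s: "0 \<le> s" "s \<le> t"
    have e1: "x + t *\<^sub>R v + s *\<^sub>R u = x + s *\<^sub>R u + t *\<^sub>R v" by (simp add: algebra_simps)
    have d1: "f differentiable (at (x + t *\<^sub>R v + s *\<^sub>R u))" using dd[of s t] s t unfolding e1 by auto
    have d2: "f differentiable (at (x + s *\<^sub>R u))" using dd[of s 0] s t by auto
    show "(\<phi> has_real_derivative (F (x + t *\<^sub>R v + s *\<^sub>R u) - F (x + s *\<^sub>R u))) (at s)"
      unfolding \<phi>_def F_def by (intro DERIV_diff line_deriv d1 d2)
  qed
  then obtain a where a: "0 < a" "a < t" and
    Ea: "\<phi> t - \<phi> 0 = t * (F (x + t *\<^sub>R v + a *\<^sub>R u) - F (x + a *\<^sub>R u))" by auto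
  define \<psi> where "\<psi> = (\<lambda>r. F ((x + a *\<^sub>R u) + r *\<^sub>R v))"
  have "\<exists>z. 0 < z \<and> z < t \<and> \<psi> t - \<psi> 0 = (t - 0) * frechet_derivative F (at (x + a *\<^sub>R u + z *\<^sub>R v)) v"
  proof (rule MVT2[OF t])
    fix r :: real assume r: "0 \<le> r" "r \<le> t"
    have d: "F differentiable (at (x + a *\<^sub>R u + r *\<^sub>R v))" using dd[of a r] r a unfolding F_def by auto
    show "(\<psi> has_real_derivative frechet_derivative F (at (x + a *\<^sub>R u + r *\<^sub>R v)) v) (at r)"
      unfolding \<psi>_def by (rule line_deriv[OF d])
  qed
  then obtain b where b: "0 < b" "b < t" and
    Eb: "\<psi> t - \<psi> 0 = t * frechet_derivative F (at (x + a *\<^sub>R u + b *\<^sub>R v)) v" by auto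
  have e2: "x + t *\<^sub>R v + a *\<^sub>R u = x + a *\<^sub>R u + t *\<^sub>R v" by (simp add: algebra_simps)
  have "f (x + t *\<^sub>R u + t *\<^sub>R v) - f (x + t *\<^sub>R u) - f (x + t *\<^sub>R v) + f x = \<phi> t - \<phi> 0"
    unfolding \<phi>_def by (simp add: algebra_simps)
  also have "\<dots> = t * (\<psi> t - \<psi> 0)" unfolding Ea \<psi>_def e2 by simp
  also have "\<dots> = t * t * frechet_derivative F (at (x + a *\<^sub>R u + b *\<^sub>R v)) v" unfolding Eb by simp
  finally show ?thesis using a b unfolding F_def by blast
qed


lemma pd_eta: "pd i f = (\<lambda>p. frechet_derivative f (at p) (axis i 1))"
  by (rule ext) (simp add: pd_def)

lemma schwarz:
  fixes f :: "real^'n::finite \<Rightarrow> real"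
  assumes U: "open U" and x: "x \<in> U" and s: "sm U 2 f"
  shows "pd i (pd j f) x = pd j (pd i f) x"
proof (rule ccontr)
  assume ne: "pd i (pd j f) x \<noteq> pd j (pd i f) x"
  define D1 where "D1 = pd j (pd i f)"
  define D2 where "D2 = pd i (pd j f)"
  define \<epsilon> where "\<epsilon> = \<bar>D1 x - D2 x\<bar> / 2"
  have ep: "\<epsilon> > 0" using ne unfolding \<epsilon>_def D1_def D2_def by auto
  have s1: "sm U 1 (pd k f)" for k using s by (simp add: numeral_2_eq_2 sm_Suc)
  have df: "\<forall>p\<in>U. f differentiable (at p)" using s by (simp add: numeral_2_eq_2 sm_Suc)
  have dpf: "\<forall>p\<in>U. pd k f differentiable (at p)" for k using s1[of k] by (simp add: sm_Suc)
  have dD: "\<forall>p\<in>U. pd l (pd k f) differentiable (at p)" for k l using s1[of k] by (simp add: sm_Suc sm_0)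
  have c1: "continuous (at x) D1" unfolding D1_def using dD x by (simp add: differentiable_imp_continuous_within)
  have c2: "continuous (at x) D2" unfolding D2_def using dD x by (simp add: differentiable_imp_continuous_within)
  obtain d1 where d1: "d1 > 0" "\<And>p. dist p x < d1 \<Longrightarrow> dist (D1 p) (D1 x) < \<epsilon>"
    using c1[unfolded continuous_at_eps_delta] ep by blast
  obtain d2 where d2: "d2 > 0" "\<And>p. dist p x < d2 \<Longrightarrow> dist (D2 p) (D2 x) < \<epsilon>"
    using c2[unfolded continuous_at_eps_delta] ep by blast
  obtain r where r: "r > 0" "ball x r \<subseteq> U" using U x open_contains_ball by blast
  define t where "t = min d1 (min d2 r) / 4"
  have t: "t > 0" unfolding t_def using d1 d2 r by auto
  define u :: "real^'n" where "u = axis i 1"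
  define v :: "real^'n" where "v = axis j 1"
  have near: "dist (x + a *\<^sub>R u + b *\<^sub>R v) x < min d1 (min d2 r)"
    if "0 \<le> a" "a \<le> t" "0 \<le> b" "b \<le> t" for a b
  proof -
    have "dist (x + a *\<^sub>R u + b *\<^sub>R v) x = norm (a *\<^sub>R u + b *\<^sub>R v)" by (simp add: dist_norm)
    also have "\<dots> \<le> norm (a *\<^sub>R u) + norm (b *\<^sub>R v)" by (rule norm_triangle_ineq)
    also have "\<dots> = a + b" using that unfolding u_def v_def by simp
    also have "\<dots> < min d1 (min d2 r)" using that t unfolding t_def by linarith
    finally show ?thesis .
  qed
  have inU: "x + a *\<^sub>R u + b *\<^sub>R v \<in> U" if "0 \<le> a" "a \<le> t" "0 \<le> b" "b \<le> t" for a b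
    using near[OF that] r by (auto simp: dist_commute subset_iff)
  have inU': "x + a *\<^sub>R v + b *\<^sub>R u \<in> U" if "0 \<le> a" "a \<le> t" "0 \<le> b" "b \<le> t" for a b
    using inU[of b a] that by (simp add: algebra_simps)
  have "\<exists>a b. 0 < a \<and> a < t \<and> 0 < b \<and> b < t \<and>
    f (x + t *\<^sub>R u + t *\<^sub>R v) - f (x + t *\<^sub>R u) - f (x + t *\<^sub>R v) + f x =
    t * t * frechet_derivative (\<lambda>p. frechet_derivative f (at p) u) (at (x + a *\<^sub>R u + b *\<^sub>R v)) v"
    by (rule route[OF t]) (use inU df dpf in \<open>auto simp: u_def pd_eta[symmetric]\<close>)
  then obtain a1 b1 where ab1: "0 < a1" "a1 < t" "0 < b1" "b1 < t" and
    E1: "f (x + t *\<^sub>R u + t *\<^sub>R v) - f (x + t *\<^sub>R u) - f (x + t *\<^sub>R v) + f x = t * t * D1 (x + a1 *\<^sub>R u + b1 *\<^sub>R v)"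
    unfolding D1_def u_def v_def pd_eta[symmetric] by (auto simp: pd_def)
  have "\<exists>a b. 0 < a \<and> a < t \<and> 0 < b \<and> b < t \<and>
    f (x + t *\<^sub>R v + t *\<^sub>R u) - f (x + t *\<^sub>R v) - f (x + t *\<^sub>R u) + f x =
    t * t * frechet_derivative (\<lambda>p. frechet_derivative f (at p) v) (at (x + a *\<^sub>R v + b *\<^sub>R u)) u"
    by (rule route[OF t]) (use inU' df dpf in \<open>auto simp: v_def pd_eta[symmetric]\<close>)
  then obtain a2 b2 where ab2: "0 < a2" "a2 < t" "0 < b2" "b2 < t" and
    E2: "f (x + t *\<^sub>R v + t *\<^sub>R u) - f (x + t *\<^sub>R v) - f (x + t *\<^sub>R u) + f x = t * t * D2 (x + a2 *\<^sub>R v + b2 *\<^sub>R u)"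
    unfolding D2_def u_def v_def pd_eta[symmetric] by (auto simp: pd_def)
  have pe: "x + t *\<^sub>R v + t *\<^sub>R u = x + t *\<^sub>R u + t *\<^sub>R v" by (simp add: algebra_simps)
  have "t * t * D1 (x + a1 *\<^sub>R u + b1 *\<^sub>R v) = f (x + t *\<^sub>R u + t *\<^sub>R v) - f (x + t *\<^sub>R u) - f (x + t *\<^sub>R v) + f x"
    using E1 by simp
  also have "\<dots> = f (x + t *\<^sub>R v + t *\<^sub>R u) - f (x + t *\<^sub>R v) - f (x + t *\<^sub>R u) + f x"
    unfolding pe by simp
  also have "\<dots> = t * t * D2 (x + a2 *\<^sub>R v + b2 *\<^sub>R u)" using E2 by simp
  finally have eq0: "t * t * D1 (x + a1 *\<^sub>R u + b1 *\<^sub>R v) = t * t * D2 (x + a2 *\<^sub>R v + b2 *\<^sub>R u)" .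
  have tn: "t \<noteq> 0" using t by simp
  from eq0 tn have eq: "D1 (x + a1 *\<^sub>R u + b1 *\<^sub>R v) = D2 (x + a2 *\<^sub>R v + b2 *\<^sub>R u)" by simp
  have n1: "dist (x + a1 *\<^sub>R u + b1 *\<^sub>R v) x < d1" using near[of a1 b1] ab1 by auto
  have n2: "dist (x + a2 *\<^sub>R v + b2 *\<^sub>R u) x < d2" using near[of b2 a2] ab2 by (auto simp: algebra_simps)
  have "\<bar>D1 x - D2 x\<bar> < 2 * \<epsilon>" using d1(2)[OF n1] d2(2)[OF n2] eq by (simp add: dist_real_def)
  then show False unfolding \<epsilon>_def by simp
qed

lemma schwarz_smooth: "open U \<Longrightarrow> x \<in> U \<Longrightarrow> smooth_on f U \<Longrightarrow> pd i (pd j f) x = pd j (pd i f) x"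
  using schwarz smooth_sm by blast


lemma det_nz_posdef:
  fixes A :: "real^'n::finite^'n"
  assumes pd: "\<forall>v::real^'n. v \<noteq> 0 \<longrightarrow> (\<Sum>i\<in>UNIV. \<Sum>j\<in>UNIV. A$i$j * v$i * v$j) > 0"
  shows "det A \<noteq> 0"
proof -
  have "\<forall>x. A *v x = 0 \<longrightarrow> x = 0"
  proof (intro allI impI)
    fix x assume ax: "A *v x = 0"
    have "(\<Sum>i\<in>UNIV. \<Sum>j\<in>UNIV. A$i$j * x$i * x$j) = (\<Sum>i\<in>UNIV. x$i * (A *v x)$i)"
      by (simp add: matrix_vector_mult_def sum_distrib_left algebra_simps)
    also have "\<dots> = 0" using ax by simp
    finally show "x = 0" using pd by force
  qed
  then have "invertible A" using matrix_left_invertible_ker invertible_left_inverse by blast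
  then show ?thesis using invertible_det_nz by blast
qed

lemma ginv_formula:
  fixes A :: "real^'n::finite^'n"
  assumes d: "det A \<noteq> 0"
  shows "matrix_inv A $ i $ j = det (\<chi> r s. if s = i then (if r = j then 1 else 0) else A$r$s) / det A"
proof -
  have inv: "invertible A" using d invertible_det_nz by blast
  have AB: "A ** matrix_inv A = mat 1"
    using inv unfolding invertible_def matrix_inv_def by (metis (mono_tags, lifting) someI_ex)
  define x where "x = (\<chi> k. matrix_inv A $ k $ j)"
  define b :: "real^'n" where "b = (\<chi> r. if r = j then 1 else 0)"
  have "A *v x = b"
  proof -
    have "(A ** matrix_inv A) $ r $ j = (if r = j then 1 else 0)" for r using AB by (simp add: mat_def)
    then show ?thesis unfolding x_def b_def
      by (simp add: vec_eq_iff matrix_vector_mult_def matrix_matrix_mult_def)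
  qed
  then have "x = (\<chi> k. det(\<chi> r s. if s=k then b$r else A$r$s) / det A)" using cramer[OF d] by blast
  then have "x $ i = det(\<chi> r s. if s=i then b$r else A$r$s) / det A" by simp
  moreover have "x $ i = matrix_inv A $ i $ j" unfolding x_def by simp
  moreover have "(\<chi> r s. if s=i then b$r else A$r$s) = (\<chi> r s. if s = i then (if r = j then 1 else 0) else A$r$s)"
    unfolding b_def by (simp cong: if_cong)
  ultimately show ?thesis by simp
qed

lemma ginv_formula2:
  fixes M :: "'n::finite \<Rightarrow> 'n \<Rightarrow> real"
  assumes d: "det (\<chi> k l. M k l) \<noteq> 0"
  shows "matrix_inv (\<chi> k l. M k l) $ i $ j = det (\<chi> r s. if s = i then (if r = j then 1 else 0) else M r s) / det (\<chi> k l. M k l)"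
proof -
  have "(\<chi> r s. if s = i then (if r = j then 1 else 0) else (\<chi> k l. M k l)$r$s) = (\<chi> r s. if s = i then (if r = j then 1 else 0) else M r s)"
    by (simp cong: if_cong)
  then show ?thesis using ginv_formula[OF d, of i j] by simp
qed

context fixes U :: "(real^'n::finite) set" assumes U: "open U"
begin

lemma smooth_if: "smooth_on f U \<Longrightarrow> smooth_on h U \<Longrightarrow> smooth_on (\<lambda>y. if P then f y else h y) U"
  by (cases P) auto

lemma smooth_det: "(\<And>r s. smooth_on (\<lambda>y. M y r s) U) \<Longrightarrow> smooth_on (\<lambda>y. det (\<chi> r s. M y r s)) U"
  unfolding det_def
  by (auto intro!: smooth_sum[OF U] smooth_mult[OF U] smooth_const[OF U] smooth_prod[OF U])

end

context fixes U :: "(real^'n::finite) set" and g :: "real^'n \<Rightarrow> 'n \<Rightarrow> 'n \<Rightarrow> real"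
  assumes U: "open U" and met: "riemannian_metric g U"
begin

lemma g_smooth: "smooth_on (\<lambda>y. g y i j) U" using met unfolding riemannian_metric_def by blast
lemma g_sym: "y \<in> U \<Longrightarrow> g y i j = g y j i" using met unfolding riemannian_metric_def by blast

lemma detg_nz: "y \<in> U \<Longrightarrow> det (\<chi> k l. g y k l) \<noteq> 0"
  using met unfolding riemannian_metric_def by (intro det_nz_posdef) auto

lemma ginv_smooth: "smooth_on (\<lambda>y. ginv g y i j) U"
proof -
  have "smooth_on (\<lambda>y. det (\<chi> r s. if s = i then (if r = j then 1 else 0) else g y r s) / det (\<chi> k l. g y k l)) U"
    using detg_nz
    by (intro smooth_divide[OF U] smooth_det[OF U]) (auto intro!: smooth_if[OF U] smooth_const[OF U] g_smooth)
  then show ?thesis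
    by (rule smooth_local[OF U]) (simp add: ginv_def ginv_formula2[OF detg_nz])
qed

lemma Chr_smooth: "smooth_on (\<lambda>y. Christoffel g y b c d) U"
  unfolding Christoffel_def
  by (intro smooth_mult[OF U] smooth_const[OF U] smooth_sum[OF U] finite_UNIV smooth_add[OF U] smooth_diff[OF U]
      ginv_smooth smooth_pd[OF U] g_smooth) auto

lemma Chr_sym: "y \<in> U \<Longrightarrow> Christoffel g y b c d = Christoffel g y c b d"
proof -
  assume y: "y \<in> U"
  have "pd e (\<lambda>y. g y b c) y = pd e (\<lambda>y. g y c b) y" for e
    by (rule pd_local[OF U y]) (simp add: g_sym)
  then show ?thesis unfolding Christoffel_def by (simp add: algebra_simps)
qed

lemma Riem_smooth: "smooth_on (\<lambda>y. Riem g y a b c d) U"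
  unfolding Riem_def
  by (intro smooth_mult[OF U] smooth_sum[OF U] finite_UNIV smooth_add[OF U] smooth_diff[OF U]
      smooth_pd[OF U] Chr_smooth) auto

end


lemma s3_132: "(\<Sum>a\<in>A. \<Sum>b\<in>B. \<Sum>c\<in>C. F a b c) = (\<Sum>a\<in>A. \<Sum>c\<in>C. \<Sum>b\<in>B. F a b c)"
  by (rule sum.cong[OF refl], rule sum.swap)
lemma s3_213: "(\<Sum>a\<in>A. \<Sum>b\<in>B. \<Sum>c\<in>C. F a b c) = (\<Sum>b\<in>B. \<Sum>a\<in>A. \<Sum>c\<in>C. F a b c)"
  by (rule sum.swap)
lemma s3_231: "(\<Sum>a\<in>A. \<Sum>b\<in>B. \<Sum>c\<in>C. F a b c) = (\<Sum>b\<in>B. \<Sum>c\<in>C. \<Sum>a\<in>A. F a b c)"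
proof -
  have "(\<Sum>a\<in>A. \<Sum>b\<in>B. \<Sum>c\<in>C. F a b c) = (\<Sum>b\<in>B. \<Sum>a\<in>A. \<Sum>c\<in>C. F a b c)" by (rule sum.swap)
  also have "\<dots> = (\<Sum>b\<in>B. \<Sum>c\<in>C. \<Sum>a\<in>A. F a b c)" by (rule sum.cong[OF refl], rule sum.swap)
  finally show ?thesis .
qed
lemma s3_312: "(\<Sum>a\<in>A. \<Sum>b\<in>B. \<Sum>c\<in>C. F a b c) = (\<Sum>c\<in>C. \<Sum>a\<in>A. \<Sum>b\<in>B. F a b c)"
proof -
  have "(\<Sum>a\<in>A. \<Sum>b\<in>B. \<Sum>c\<in>C. F a b c) = (\<Sum>a\<in>A. \<Sum>c\<in>C. \<Sum>b\<in>B. F a b c)" by (rule s3_132)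
  also have "\<dots> = (\<Sum>c\<in>C. \<Sum>a\<in>A. \<Sum>b\<in>B. F a b c)" by (rule sum.swap)
  finally show ?thesis .
qed
lemma s3_321: "(\<Sum>a\<in>A. \<Sum>b\<in>B. \<Sum>c\<in>C. F a b c) = (\<Sum>c\<in>C. \<Sum>b\<in>B. \<Sum>a\<in>A. F a b c)"
proof -
  have "(\<Sum>a\<in>A. \<Sum>b\<in>B. \<Sum>c\<in>C. F a b c) = (\<Sum>c\<in>C. \<Sum>a\<in>A. \<Sum>b\<in>B. F a b c)" by (rule s3_312)
  also have "\<dots> = (\<Sum>c\<in>C. \<Sum>b\<in>B. \<Sum>a\<in>A. F a b c)" by (rule sum.cong[OF refl], rule sum.swap)
  finally show ?thesis .
qed

locale conn =
  fixes G :: "'n::finite \<Rightarrow> 'n \<Rightarrow> 'n \<Rightarrow> real"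
    and dG :: "'n \<Rightarrow> 'n \<Rightarrow> 'n \<Rightarrow> 'n \<Rightarrow> real"
    and ddG :: "'n \<Rightarrow> 'n \<Rightarrow> 'n \<Rightarrow> 'n \<Rightarrow> 'n \<Rightarrow> real"
  assumes Gs: "G a b c = G b a c"
    and dGs: "dG q a b c = dG q b a c"
    and ddGs1: "ddG r q a b c = ddG q r a b c"
    and ddGs2: "ddG r q a b c = ddG r q b a c"
begin

definition R where "R a b c d = dG a b c d - dG b a c d - (\<Sum>k\<in>UNIV. G a c k * G b k d) + (\<Sum>k\<in>UNIV. G a k d * G b c k)"
definition dR where "dR q a b c d = ddG q a b c d - ddG q b a c d
   - (\<Sum>k\<in>UNIV. dG q a c k * G b k d + G a c k * dG q b k d)
   + (\<Sum>k\<in>UNIV. dG q a k d * G b c k + G a k d * dG q b c k)"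
definition Ric where "Ric a c = (\<Sum>b\<in>UNIV. R a b c b)"
definition dRic where "dRic q a c = (\<Sum>b\<in>UNIV. dR q a b c b)"
definition cRic where "cRic q a c = dRic q a c - (\<Sum>k\<in>UNIV. G q a k * Ric k c) - (\<Sum>k\<in>UNIV. G q c k * Ric a k)"
definition divR where "divR b c e = (\<Sum>m\<in>UNIV. dR m b c e m
   - (\<Sum>k\<in>UNIV. G m b k * R k c e m) - (\<Sum>k\<in>UNIV. G m c k * R b k e m)
   - (\<Sum>k\<in>UNIV. G m e k * R b c k m) + (\<Sum>k\<in>UNIV. G m k m * R b c e k))"

lemma contracted_bianchi: "divR b c e = cRic c b e - cRic b c e"
proof -
  have D0: "divR b c e = (\<Sum>m\<in>UNIV. dR m b c e m) - (\<Sum>m\<in>UNIV. \<Sum>k\<in>UNIV. G m b k * R k c e m) - (\<Sum>m\<in>UNIV. \<Sum>k\<in>UNIV. G m c k * R b k e m)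
     - (\<Sum>m\<in>UNIV. \<Sum>k\<in>UNIV. G m e k * R b c k m) + (\<Sum>m\<in>UNIV. \<Sum>k\<in>UNIV. G m k m * R b c e k)"
    unfolding divR_def by (simp add: sum.distrib sum_subtractf)
  have P1: "(\<Sum>m\<in>UNIV. dR m b c e m) = (\<Sum>m\<in>UNIV. ddG m b c e m) - (\<Sum>m\<in>UNIV. ddG m c b e m)
    - (\<Sum>m\<in>UNIV. \<Sum>k\<in>UNIV. dG m b e k * G c k m) - (\<Sum>m\<in>UNIV. \<Sum>k\<in>UNIV. G b e k * dG m c k m)
    + (\<Sum>m\<in>UNIV. \<Sum>k\<in>UNIV. dG m b k m * G c e k) + (\<Sum>m\<in>UNIV. \<Sum>k\<in>UNIV. G b k m * dG m c e k)"
    unfolding dR_def by (simp add: sum.distrib sum_subtractf)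
  have B1: "(\<Sum>m\<in>UNIV. \<Sum>k\<in>UNIV. G m b k * R k c e m) = (\<Sum>m\<in>UNIV. \<Sum>k\<in>UNIV. G m b k * dG k c e m) - (\<Sum>m\<in>UNIV. \<Sum>k\<in>UNIV. G m b k * dG c k e m)
     - (\<Sum>m\<in>UNIV. \<Sum>k\<in>UNIV. \<Sum>l\<in>UNIV. G m b k * (G k e l * G c l m)) + (\<Sum>m\<in>UNIV. \<Sum>k\<in>UNIV. \<Sum>l\<in>UNIV. G m b k * (G k l m * G c e l))"
    unfolding R_def by (simp add: sum.distrib sum_subtractf sum_distrib_left ring_distribs)
  have B2: "(\<Sum>m\<in>UNIV. \<Sum>k\<in>UNIV. G m c k * R b k e m) = (\<Sum>m\<in>UNIV. \<Sum>k\<in>UNIV. G m c k * dG b k e m) - (\<Sum>m\<in>UNIV. \<Sum>k\<in>UNIV. G m c k * dG k b e m)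
     - (\<Sum>m\<in>UNIV. \<Sum>k\<in>UNIV. \<Sum>l\<in>UNIV. G m c k * (G b e l * G k l m)) + (\<Sum>m\<in>UNIV. \<Sum>k\<in>UNIV. \<Sum>l\<in>UNIV. G m c k * (G b l m * G k e l))"
    unfolding R_def by (simp add: sum.distrib sum_subtractf sum_distrib_left ring_distribs)
  have B3: "(\<Sum>m\<in>UNIV. \<Sum>k\<in>UNIV. G m e k * R b c k m) = (\<Sum>m\<in>UNIV. \<Sum>k\<in>UNIV. G m e k * dG b c k m) - (\<Sum>m\<in>UNIV. \<Sum>k\<in>UNIV. G m e k * dG c b k m)
     - (\<Sum>m\<in>UNIV. \<Sum>k\<in>UNIV. \<Sum>l\<in>UNIV. G m e k * (G b k l * G c l m)) + (\<Sum>m\<in>UNIV. \<Sum>k\<in>UNIV. \<Sum>l\<in>UNIV. G m e k * (G b l m * G c k l))"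
    unfolding R_def by (simp add: sum.distrib sum_subtractf sum_distrib_left ring_distribs)
  have B4: "(\<Sum>m\<in>UNIV. \<Sum>k\<in>UNIV. G m k m * R b c e k) = (\<Sum>m\<in>UNIV. \<Sum>k\<in>UNIV. G m k m * dG b c e k) - (\<Sum>m\<in>UNIV. \<Sum>k\<in>UNIV. G m k m * dG c b e k)
     - (\<Sum>m\<in>UNIV. \<Sum>k\<in>UNIV. \<Sum>l\<in>UNIV. G m k m * (G b e l * G c l k)) + (\<Sum>m\<in>UNIV. \<Sum>k\<in>UNIV. \<Sum>l\<in>UNIV. G m k m * (G b l k * G c e l))"
    unfolding R_def by (simp add: sum.distrib sum_subtractf sum_distrib_left ring_distribs)
  have C: "cRic c b e - cRic b c e = dRic c b e - dRic b c e - (\<Sum>k\<in>UNIV. G c e k * Ric b k) + (\<Sum>k\<in>UNIV. G b e k * Ric c k)"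
  proof -
    have "(\<Sum>k\<in>UNIV. G c b k * Ric k e) = (\<Sum>k\<in>UNIV. G b c k * Ric k e)" by (simp add: Gs[of c b])
    then show ?thesis unfolding cRic_def by simp
  qed
  have dRc: "dRic c b e = (\<Sum>m\<in>UNIV. ddG c b m e m) - (\<Sum>m\<in>UNIV. ddG c m b e m)
    - (\<Sum>m\<in>UNIV. \<Sum>k\<in>UNIV. dG c b e k * G m k m) - (\<Sum>m\<in>UNIV. \<Sum>k\<in>UNIV. G b e k * dG c m k m)
    + (\<Sum>m\<in>UNIV. \<Sum>k\<in>UNIV. dG c b k m * G m e k) + (\<Sum>m\<in>UNIV. \<Sum>k\<in>UNIV. G b k m * dG c m e k)"
    unfolding dRic_def dR_def by (simp add: sum.distrib sum_subtractf)
  have dRb: "dRic b c e = (\<Sum>m\<in>UNIV. ddG b c m e m) - (\<Sum>m\<in>UNIV. ddG b m c e m)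
    - (\<Sum>m\<in>UNIV. \<Sum>k\<in>UNIV. dG b c e k * G m k m) - (\<Sum>m\<in>UNIV. \<Sum>k\<in>UNIV. G c e k * dG b m k m)
    + (\<Sum>m\<in>UNIV. \<Sum>k\<in>UNIV. dG b c k m * G m e k) + (\<Sum>m\<in>UNIV. \<Sum>k\<in>UNIV. G c k m * dG b m e k)"
    unfolding dRic_def dR_def by (simp add: sum.distrib sum_subtractf)
  have D2: "(\<Sum>k\<in>UNIV. G c e k * Ric b k) = (\<Sum>k\<in>UNIV. \<Sum>m\<in>UNIV. G c e k * dG b m k m) - (\<Sum>k\<in>UNIV. \<Sum>m\<in>UNIV. G c e k * dG m b k m)
     - (\<Sum>k\<in>UNIV. \<Sum>m\<in>UNIV. \<Sum>l\<in>UNIV. G c e k * (G b k l * G m l m)) + (\<Sum>k\<in>UNIV. \<Sum>m\<in>UNIV. \<Sum>l\<in>UNIV. G c e k * (G b l m * G m k l))"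
    unfolding Ric_def R_def by (simp add: sum.distrib sum_subtractf sum_distrib_left ring_distribs)
  have D2': "(\<Sum>k\<in>UNIV. G b e k * Ric c k) = (\<Sum>k\<in>UNIV. \<Sum>m\<in>UNIV. G b e k * dG c m k m) - (\<Sum>k\<in>UNIV. \<Sum>m\<in>UNIV. G b e k * dG m c k m)
     - (\<Sum>k\<in>UNIV. \<Sum>m\<in>UNIV. \<Sum>l\<in>UNIV. G b e k * (G c k l * G m l m)) + (\<Sum>k\<in>UNIV. \<Sum>m\<in>UNIV. \<Sum>l\<in>UNIV. G b e k * (G c l m * G m k l))"
    unfolding Ric_def R_def by (simp add: sum.distrib sum_subtractf sum_distrib_left ring_distribs)
  have e1: "(\<Sum>m\<in>UNIV. ddG c b m e m) = (\<Sum>m\<in>UNIV. ddG b c m e m)" by (simp add: ddGs1[of c b])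
  have e2: "(\<Sum>m\<in>UNIV. ddG c m b e m) = (\<Sum>m\<in>UNIV. ddG m c b e m)" by (simp add: ddGs1[of c])
  have e3: "(\<Sum>m\<in>UNIV. ddG b m c e m) = (\<Sum>m\<in>UNIV. ddG m b c e m)" by (simp add: ddGs1[of b])
  have f1: "(\<Sum>m\<in>UNIV. \<Sum>k\<in>UNIV. G m k m * dG b c e k) = (\<Sum>m\<in>UNIV. \<Sum>k\<in>UNIV. dG b c e k * G m k m)" by (simp add: mult.commute)
  have f2: "(\<Sum>m\<in>UNIV. \<Sum>k\<in>UNIV. G m k m * dG c b e k) = (\<Sum>m\<in>UNIV. \<Sum>k\<in>UNIV. dG c b e k * G m k m)" by (simp add: mult.commute)
  have f3: "(\<Sum>m\<in>UNIV. \<Sum>k\<in>UNIV. G m e k * dG b c k m) = (\<Sum>m\<in>UNIV. \<Sum>k\<in>UNIV. dG b c k m * G m e k)" by (simp add: mult.commute)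
  have f4: "(\<Sum>m\<in>UNIV. \<Sum>k\<in>UNIV. G m e k * dG c b k m) = (\<Sum>m\<in>UNIV. \<Sum>k\<in>UNIV. dG c b k m * G m e k)" by (simp add: mult.commute)
  have f5: "(\<Sum>m\<in>UNIV. \<Sum>k\<in>UNIV. G b e k * dG c m k m) = (\<Sum>k\<in>UNIV. \<Sum>m\<in>UNIV. G b e k * dG c m k m)" by (rule sum.swap)
  have f6: "(\<Sum>m\<in>UNIV. \<Sum>k\<in>UNIV. G c e k * dG b m k m) = (\<Sum>k\<in>UNIV. \<Sum>m\<in>UNIV. G c e k * dG b m k m)" by (rule sum.swap)
  have f7: "(\<Sum>m\<in>UNIV. \<Sum>k\<in>UNIV. G b e k * dG m c k m) = (\<Sum>k\<in>UNIV. \<Sum>m\<in>UNIV. G b e k * dG m c k m)" by (rule sum.swap)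
  have f8: "(\<Sum>m\<in>UNIV. \<Sum>k\<in>UNIV. dG m b k m * G c e k) = (\<Sum>k\<in>UNIV. \<Sum>m\<in>UNIV. G c e k * dG m b k m)"
    by (rule trans[OF sum.swap]) (simp add: mult.commute)
  have f9: "(\<Sum>m\<in>UNIV. \<Sum>k\<in>UNIV. G m b k * dG k c e m) = (\<Sum>m\<in>UNIV. \<Sum>k\<in>UNIV. G b k m * dG m c e k)"
    by (rule trans[OF sum.swap]) (simp add: Gs[of _ b])
  have f10: "(\<Sum>m\<in>UNIV. \<Sum>k\<in>UNIV. G m c k * dG k b e m) = (\<Sum>m\<in>UNIV. \<Sum>k\<in>UNIV. dG m b e k * G c k m)"
    by (rule trans[OF sum.swap]) (simp add: Gs[of _ c] mult.commute)
  have f11: "(\<Sum>m\<in>UNIV. \<Sum>k\<in>UNIV. G m b k * dG c k e m) = (\<Sum>m\<in>UNIV. \<Sum>k\<in>UNIV. G b k m * dG c m e k)"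
    by (rule trans[OF sum.swap]) (simp add: Gs[of _ b])
  have f12: "(\<Sum>m\<in>UNIV. \<Sum>k\<in>UNIV. G m c k * dG b k e m) = (\<Sum>m\<in>UNIV. \<Sum>k\<in>UNIV. G c k m * dG b m e k)"
    by (rule trans[OF sum.swap]) (simp add: Gs[of _ c])
  have g1: "(\<Sum>m\<in>UNIV. \<Sum>k\<in>UNIV. \<Sum>l\<in>UNIV. G m k m * (G b l k * G c e l)) = (\<Sum>k\<in>UNIV. \<Sum>m\<in>UNIV. \<Sum>l\<in>UNIV. G c e k * (G b k l * G m l m))"
    by (rule trans[OF s3_312]) (simp add: Gs mult_ac)
  have g2: "(\<Sum>m\<in>UNIV. \<Sum>k\<in>UNIV. \<Sum>l\<in>UNIV. G m k m * (G b e l * G c l k)) = (\<Sum>k\<in>UNIV. \<Sum>m\<in>UNIV. \<Sum>l\<in>UNIV. G b e k * (G c k l * G m l m))"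
    by (rule trans[OF s3_312]) (simp add: Gs mult_ac)
  have g3: "(\<Sum>m\<in>UNIV. \<Sum>k\<in>UNIV. \<Sum>l\<in>UNIV. G m b k * (G k l m * G c e l)) = (\<Sum>k\<in>UNIV. \<Sum>m\<in>UNIV. \<Sum>l\<in>UNIV. G c e k * (G b l m * G m k l))"
    by (rule trans[OF s3_321]) (simp add: Gs mult_ac)
  have g4: "(\<Sum>m\<in>UNIV. \<Sum>k\<in>UNIV. \<Sum>l\<in>UNIV. G m c k * (G b e l * G k l m)) = (\<Sum>k\<in>UNIV. \<Sum>m\<in>UNIV. \<Sum>l\<in>UNIV. G b e k * (G c l m * G m k l))"
    by (rule trans[OF s3_321]) (simp add: Gs mult_ac)
  have g5: "(\<Sum>m\<in>UNIV. \<Sum>k\<in>UNIV. \<Sum>l\<in>UNIV. G m e k * (G b l m * G c k l)) = (\<Sum>m\<in>UNIV. \<Sum>k\<in>UNIV. \<Sum>l\<in>UNIV. G m b k * (G k e l * G c l m))"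
    by (rule trans[OF s3_312]) (simp add: Gs mult_ac)
  have g6: "(\<Sum>m\<in>UNIV. \<Sum>k\<in>UNIV. \<Sum>l\<in>UNIV. G m c k * (G b l m * G k e l)) = (\<Sum>m\<in>UNIV. \<Sum>k\<in>UNIV. \<Sum>l\<in>UNIV. G m e k * (G b k l * G c l m))"
    by (rule trans[OF s3_231]) (simp add: Gs mult_ac)
  show ?thesis
    using D0 P1 B1 B2 B3 B4 C dRc dRb D2 D2' e1 e2 e3 f1 f2 f3 f4 f5 f6 f7 f8 f9 f10 f11 f12 g1 g2 g3 g4 g5 g6
    by linarith
qed

lemma R_anti: "R a b c d = - R b a c d"
  unfolding R_def by (simp add: mult.commute)

lemma first_bianchi: "R a b c d + R b c a d + R c a b d = 0"
proof -
  have "dG a b c d = dG a c b d" "dG b c a d = dG b a c d" "dG c a b d = dG c b a d" using dGs by blast+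
  moreover have "(\<Sum>k\<in>UNIV. G a c k * G b k d) = (\<Sum>k\<in>UNIV. G b k d * G c a k)" by (simp add: Gs[of a c] mult.commute)
  moreover have "(\<Sum>k\<in>UNIV. G b a k * G c k d) = (\<Sum>k\<in>UNIV. G c k d * G a b k)" by (simp add: Gs[of a b] mult.commute)
  moreover have "(\<Sum>k\<in>UNIV. G c b k * G a k d) = (\<Sum>k\<in>UNIV. G a k d * G b c k)" by (simp add: Gs[of c b] mult.commute)
  ultimately show ?thesis unfolding R_def by linarith
qed

end

locale ric = conn +
  fixes T :: "'a \<Rightarrow> 'a \<Rightarrow> real" and dT :: "'a \<Rightarrow> 'a \<Rightarrow> 'a \<Rightarrow> real"
    and ddT :: "'a \<Rightarrow> 'a \<Rightarrow> 'a \<Rightarrow> 'a \<Rightarrow> real"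
  assumes ddTs: "ddT r q a b = ddT q r a b"
begin

definition cT where "cT q a b = dT q a b - (\<Sum>k\<in>UNIV. G q a k * T k b) - (\<Sum>k\<in>UNIV. G q b k * T a k)"
definition dcT where "dcT r q a b = ddT r q a b - (\<Sum>k\<in>UNIV. dG r q a k * T k b + G q a k * dT r k b)
   - (\<Sum>k\<in>UNIV. dG r q b k * T a k + G q b k * dT r a k)"
definition ccT where "ccT r q a b = dcT r q a b - (\<Sum>k\<in>UNIV. G r q k * cT k a b) - (\<Sum>k\<in>UNIV. G r a k * cT q k b)
   - (\<Sum>k\<in>UNIV. G r b k * cT q a k)"

lemma ccT_exp: "ccT p c b e = ddT p c b e - (\<Sum>k\<in>UNIV. dG p c b k * T k e) - (\<Sum>k\<in>UNIV. G c b k * dT p k e)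
   - (\<Sum>k\<in>UNIV. dG p c e k * T b k) - (\<Sum>k\<in>UNIV. G c e k * dT p b k) - (\<Sum>k\<in>UNIV. G p c k * cT k b e)
   - (\<Sum>k\<in>UNIV. G p b k * dT c k e) + (\<Sum>k\<in>UNIV. \<Sum>l\<in>UNIV. G p b k * (G c k l * T l e)) + (\<Sum>k\<in>UNIV. \<Sum>l\<in>UNIV. G p b k * (G c e l * T k l))
   - (\<Sum>k\<in>UNIV. G p e k * dT c b k) + (\<Sum>k\<in>UNIV. \<Sum>l\<in>UNIV. G p e k * (G c b l * T l k)) + (\<Sum>k\<in>UNIV. \<Sum>l\<in>UNIV. G p e k * (G c k l * T b l))"
  unfolding ccT_def dcT_def cT_def
  by (simp add: sum.distrib sum_subtractf sum_distrib_left ring_distribs)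

lemma ricci: "ccT p c b e - ccT c p b e = - (\<Sum>m\<in>UNIV. R p c b m * T m e) - (\<Sum>m\<in>UNIV. R p c e m * T b m)"
proof -
  have r1: "(\<Sum>m\<in>UNIV. R p c b m * T m e) = (\<Sum>m\<in>UNIV. dG p c b m * T m e) - (\<Sum>m\<in>UNIV. dG c p b m * T m e)
    - (\<Sum>m\<in>UNIV. \<Sum>l\<in>UNIV. G p b l * (G c l m * T m e)) + (\<Sum>m\<in>UNIV. \<Sum>l\<in>UNIV. G p l m * (G c b l * T m e))"
    unfolding R_def by (simp add: sum.distrib sum_subtractf sum_distrib_left sum_distrib_right ring_distribs mult_ac)
  have r2: "(\<Sum>m\<in>UNIV. R p c e m * T b m) = (\<Sum>m\<in>UNIV. dG p c e m * T b m) - (\<Sum>m\<in>UNIV. dG c p e m * T b m)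
    - (\<Sum>m\<in>UNIV. \<Sum>l\<in>UNIV. G p e l * (G c l m * T b m)) + (\<Sum>m\<in>UNIV. \<Sum>l\<in>UNIV. G p l m * (G c e l * T b m))"
    unfolding R_def by (simp add: sum.distrib sum_subtractf sum_distrib_left sum_distrib_right ring_distribs mult_ac)
  have h1: "ddT p c b e = ddT c p b e" by (rule ddTs)
  have h2: "(\<Sum>k\<in>UNIV. G p c k * cT k b e) = (\<Sum>k\<in>UNIV. G c p k * cT k b e)" by (simp add: Gs[of p c])
  have h3: "(\<Sum>k\<in>UNIV. \<Sum>l\<in>UNIV. G p b k * (G c e l * T k l)) = (\<Sum>k\<in>UNIV. \<Sum>l\<in>UNIV. G c e k * (G p b l * T l k))"
    by (rule trans[OF sum.swap]) (simp add: mult_ac)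
  have h4: "(\<Sum>k\<in>UNIV. \<Sum>l\<in>UNIV. G p e k * (G c b l * T l k)) = (\<Sum>k\<in>UNIV. \<Sum>l\<in>UNIV. G c b k * (G p e l * T k l))"
    by (rule trans[OF sum.swap]) (simp add: mult_ac)
  have h5: "(\<Sum>k\<in>UNIV. \<Sum>l\<in>UNIV. G p b k * (G c k l * T l e)) = (\<Sum>m\<in>UNIV. \<Sum>l\<in>UNIV. G p b l * (G c l m * T m e))"
    by (rule sum.swap)
  have h6: "(\<Sum>k\<in>UNIV. \<Sum>l\<in>UNIV. G c b k * (G p k l * T l e)) = (\<Sum>m\<in>UNIV. \<Sum>l\<in>UNIV. G p l m * (G c b l * T m e))"
    by (rule trans[OF sum.swap]) (simp add: mult_ac)
  have h7: "(\<Sum>k\<in>UNIV. \<Sum>l\<in>UNIV. G p e k * (G c k l * T b l)) = (\<Sum>m\<in>UNIV. \<Sum>l\<in>UNIV. G p e l * (G c l m * T b m))"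
    by (rule sum.swap)
  have h8: "(\<Sum>k\<in>UNIV. \<Sum>l\<in>UNIV. G c e k * (G p k l * T b l)) = (\<Sum>m\<in>UNIV. \<Sum>l\<in>UNIV. G p l m * (G c e l * T b m))"
    by (rule trans[OF sum.swap]) (simp add: mult_ac)
  have h9: "(\<Sum>k\<in>UNIV. dG p c b k * T k e) = (\<Sum>m\<in>UNIV. dG p c b m * T m e)" "(\<Sum>k\<in>UNIV. dG c p b k * T k e) = (\<Sum>m\<in>UNIV. dG c p b m * T m e)"
    "(\<Sum>k\<in>UNIV. dG p c e k * T b k) = (\<Sum>m\<in>UNIV. dG p c e m * T b m)" "(\<Sum>k\<in>UNIV. dG c p e k * T b k) = (\<Sum>m\<in>UNIV. dG c p e m * T b m)"
    by simp_all
  show ?thesis using ccT_exp[of p c b e] ccT_exp[of c p b e] r1 r2 h1 h2 h3 h4 h5 h6 h7 h8 h9 by linarith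
qed

lemma ricci_cyc:
  "(ccT p c b e - ccT c p b e) + (ccT b p c e - ccT p b c e) + (ccT c b p e - ccT b c p e)
   = (\<Sum>m\<in>UNIV. T p m * R b c e m) + (\<Sum>m\<in>UNIV. T b m * R c p e m) + (\<Sum>m\<in>UNIV. T c m * R p b e m)"
proof -
  have fb: "(\<Sum>m\<in>UNIV. R p c b m * T m e) + (\<Sum>m\<in>UNIV. R b p c m * T m e) + (\<Sum>m\<in>UNIV. R c b p m * T m e) = 0"
  proof -
    have "(\<Sum>m\<in>UNIV. R p c b m * T m e) + (\<Sum>m\<in>UNIV. R b p c m * T m e) + (\<Sum>m\<in>UNIV. R c b p m * T m e)
      = (\<Sum>m\<in>UNIV. (R p c b m + R c b p m + R b p c m) * T m e)"
      by (simp add: sum.distrib ring_distribs)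
    also have "\<dots> = 0" by (simp add: first_bianchi)
    finally show ?thesis .
  qed
  have a1: "(\<Sum>m\<in>UNIV. R p c e m * T b m) = - (\<Sum>m\<in>UNIV. T b m * R c p e m)"
    by (simp add: R_anti[of p c] sum_negf mult.commute)
  have a2: "(\<Sum>m\<in>UNIV. R b p e m * T c m) = - (\<Sum>m\<in>UNIV. T c m * R p b e m)"
    by (simp add: R_anti[of b p] sum_negf mult.commute)
  have a3: "(\<Sum>m\<in>UNIV. R c b e m * T p m) = - (\<Sum>m\<in>UNIV. T p m * R b c e m)"
    by (simp add: R_anti[of c b] sum_negf mult.commute)
  show ?thesis using ricci[of p c b e] ricci[of b p c e] ricci[of c b p e] fb a1 a2 a3 by linarith
qed

end

locale kl =
  fixes G :: "'n::finite \<Rightarrow> 'n \<Rightarrow> 'n \<Rightarrow> real"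
    and L :: "'n \<Rightarrow> real" and dL :: "'n \<Rightarrow> 'n \<Rightarrow> real"
    and K :: "'n \<Rightarrow> 'n \<Rightarrow> 'n \<Rightarrow> 'n \<Rightarrow> real" and dK :: "'n \<Rightarrow> 'n \<Rightarrow> 'n \<Rightarrow> 'n \<Rightarrow> 'n \<Rightarrow> real"
begin

definition cK where "cK q a b c d = dK q a b c d - (\<Sum>k\<in>UNIV. G q a k * K k b c d) - (\<Sum>k\<in>UNIV. G q b k * K a k c d)
   - (\<Sum>k\<in>UNIV. G q c k * K a b k d) + (\<Sum>k\<in>UNIV. G q k d * K a b c k)"
definition nL where "nL q a = dL q a - (\<Sum>k\<in>UNIV. G q a k * L k)"
definition W where "W a b c d e = L a * K b c d e"
definition dW where "dW q a b c d e = dL q a * K b c d e + L a * dK q b c d e"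
definition nW where "nW q a b c d e = dW q a b c d e - (\<Sum>k\<in>UNIV. G q a k * W k b c d e) - (\<Sum>k\<in>UNIV. G q b k * W a k c d e)
   - (\<Sum>k\<in>UNIV. G q c k * W a b k d e) - (\<Sum>k\<in>UNIV. G q d k * W a b c k e) + (\<Sum>k\<in>UNIV. G q k e * W a b c d k)"
definition Dx where "Dx b c e = (\<Sum>m\<in>UNIV. L m * K b c e m)"
definition dD where "dD q b c e = (\<Sum>m\<in>UNIV. dL q m * K b c e m + L m * dK q b c e m)"
definition nD where "nD q b c e = dD q b c e - (\<Sum>k\<in>UNIV. G q b k * Dx k c e) - (\<Sum>k\<in>UNIV. G q c k * Dx b k e) - (\<Sum>k\<in>UNIV. G q e k * Dx b c k)"

lemma W1: "nW q a b c d e = nL q a * K b c d e + L a * cK q b c d e"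
  unfolding nW_def nL_def cK_def W_def dW_def
  by (simp add: sum_distrib_left sum_distrib_right ring_distribs sum_subtractf mult_ac)

lemma W2:
  assumes Gs: "\<And>a b c. G a b c = G b a c"
  shows "nD q b c e = (\<Sum>m\<in>UNIV. nL q m * K b c e m + L m * cK q b c e m)"
proof -
  have e1: "nD q b c e = (\<Sum>m\<in>UNIV. dL q m * K b c e m) + (\<Sum>m\<in>UNIV. L m * dK q b c e m) - (\<Sum>k\<in>UNIV. \<Sum>m\<in>UNIV. G q b k * (L m * K k c e m))
     - (\<Sum>k\<in>UNIV. \<Sum>m\<in>UNIV. G q c k * (L m * K b k e m)) - (\<Sum>k\<in>UNIV. \<Sum>m\<in>UNIV. G q e k * (L m * K b c k m))"
    unfolding nD_def dD_def Dx_def by (simp add: sum.distrib sum_distrib_left)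
  have e2: "(\<Sum>m\<in>UNIV. nL q m * K b c e m + L m * cK q b c e m) = (\<Sum>m\<in>UNIV. dL q m * K b c e m) - (\<Sum>m\<in>UNIV. \<Sum>k\<in>UNIV. G q m k * L k * K b c e m)
     + (\<Sum>m\<in>UNIV. L m * dK q b c e m) - (\<Sum>m\<in>UNIV. \<Sum>k\<in>UNIV. L m * (G q b k * K k c e m)) - (\<Sum>m\<in>UNIV. \<Sum>k\<in>UNIV. L m * (G q c k * K b k e m))
     - (\<Sum>m\<in>UNIV. \<Sum>k\<in>UNIV. L m * (G q e k * K b c k m)) + (\<Sum>m\<in>UNIV. \<Sum>k\<in>UNIV. L m * (G q k m * K b c e k))"
    unfolding nL_def cK_def by (simp add: sum.distrib sum_subtractf sum_distrib_left sum_distrib_right ring_distribs)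
  have s1: "(\<Sum>k\<in>UNIV. \<Sum>m\<in>UNIV. G q b k * (L m * K k c e m)) = (\<Sum>m\<in>UNIV. \<Sum>k\<in>UNIV. L m * (G q b k * K k c e m))"
    by (rule trans[OF sum.swap]) (simp add: mult_ac)
  have s2: "(\<Sum>k\<in>UNIV. \<Sum>m\<in>UNIV. G q c k * (L m * K b k e m)) = (\<Sum>m\<in>UNIV. \<Sum>k\<in>UNIV. L m * (G q c k * K b k e m))"
    by (rule trans[OF sum.swap]) (simp add: mult_ac)
  have s3: "(\<Sum>k\<in>UNIV. \<Sum>m\<in>UNIV. G q e k * (L m * K b c k m)) = (\<Sum>m\<in>UNIV. \<Sum>k\<in>UNIV. L m * (G q e k * K b c k m))"
    by (rule trans[OF sum.swap]) (simp add: mult_ac)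
  have s4: "(\<Sum>m\<in>UNIV. \<Sum>k\<in>UNIV. G q m k * L k * K b c e m) = (\<Sum>m\<in>UNIV. \<Sum>k\<in>UNIV. L m * (G q k m * K b c e k))"
    by (rule trans[OF sum.swap]) (simp add: mult_ac)
  show ?thesis using e1 e2 s1 s2 s3 s4 by linarith
qed

lemma W3:
  assumes Gs: "\<And>a b c. G a b c = G b a c"
    and rec: "\<And>q a b c d. cK q a b c d = L q * K a b c d"
    and clo: "\<And>q a. nL q a = nL a q"
  shows "(\<Sum>m\<in>UNIV. nW m p b c e m + nW m b c p e m + nW m c p b e m) = nD p b c e + nD b c p e + nD c p b e"
  unfolding W1 W2[OF Gs] rec using clo by (simp add: sum.distrib mult_ac)

end

locale cod =
  fixes G :: "'n::finite \<Rightarrow> 'n \<Rightarrow> 'n \<Rightarrow> real"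
    and a :: "'n \<Rightarrow> 'n \<Rightarrow> real" and da :: "'n \<Rightarrow> 'n \<Rightarrow> 'n \<Rightarrow> real"
    and f :: "'n \<Rightarrow> real" and ddf :: "'n \<Rightarrow> 'n \<Rightarrow> real"
  assumes Gs: "G p q r = G q p r"
    and as: "a p q = a q p"
    and ddfs: "ddf p q = ddf q p"
    and codazzi: "da q b c - (\<Sum>k\<in>UNIV. G q b k * a k c) - (\<Sum>k\<in>UNIV. G q c k * a b k)
                = da b q c - (\<Sum>k\<in>UNIV. G b q k * a k c) - (\<Sum>k\<in>UNIV. G b c k * a q k)"
begin

definition E where "E b c e = a b e * f c - a c e * f b"
definition dE where "dE p b c e = da p b e * f c + a b e * ddf p c - (da p c e * f b + a c e * ddf p b)"
definition nE where "nE p b c e = dE p b c e - (\<Sum>k\<in>UNIV. G p b k * E k c e) - (\<Sum>k\<in>UNIV. G p c k * E b k e) - (\<Sum>k\<in>UNIV. G p e k * E b c k)"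

lemma nE_cyc: "nE p b c e + nE b c p e + nE c p b e = 0"
proof -
  define na where "na q b c = da q b c - (\<Sum>k\<in>UNIV. G q b k * a k c) - (\<Sum>k\<in>UNIV. G q c k * a b k)" for q b c
  define H where "H p c = ddf p c - (\<Sum>k\<in>UNIV. G p c k * f k)" for p c
  have nas: "na q b c = na b q c" for q b c unfolding na_def using codazzi .
  have Hs: "H p c = H c p" for p c unfolding H_def by (simp add: ddfs Gs[of p c])
  have ex: "nE p b c e = na p b e * f c + a b e * H p c - na p c e * f b - a c e * H p b" for p b c e
    unfolding nE_def dE_def E_def na_def H_def
    by (simp add: sum_distrib_left sum_distrib_right ring_distribs sum_subtractf sum.distrib as mult_ac)
  show ?thesis unfolding ex using nas[of p b e] nas[of b c e] nas[of c p e] Hs[of p c] Hs[of b p] Hs[of c b]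
    by (simp add: algebra_simps)
qed

end


lemma nabla_T00: "nabla g (T00 f) x a [] [] = pd a f x"
  unfolding nabla_def T00_def by simp

lemma nabla_T01: "nabla g (T01 f) x a [b] [] = pd a (\<lambda>y. f y b) x - (\<Sum>k\<in>UNIV. Christoffel g x a b k * f x k)"
  unfolding nabla_def T01_def by simp

lemma nabla_T02: "nabla g (T02 f) x a [b, c] [] = pd a (\<lambda>y. f y b c) x - (\<Sum>k\<in>UNIV. Christoffel g x a b k * f x k c)
   - (\<Sum>k\<in>UNIV. Christoffel g x a c k * f x b k)"
  unfolding nabla_def T02_def by (simp add: eval_nat_numeral)

lemma nabla_T13: "nabla g (T13 f) x a [b, c, d] [e] = pd a (\<lambda>y. f y b c d e) x
   - (\<Sum>k\<in>UNIV. Christoffel g x a b k * f x k c d e) - (\<Sum>k\<in>UNIV. Christoffel g x a c k * f x b k d e)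
   - (\<Sum>k\<in>UNIV. Christoffel g x a d k * f x b c k e) + (\<Sum>k\<in>UNIV. Christoffel g x a k e * f x b c d k)"
  unfolding nabla_def T13_def by (simp add: eval_nat_numeral)

lemma nabla_T14: "nabla g (T14 f) x a [b, c, d, d'] [e] = pd a (\<lambda>y. f y b c d d' e) x
   - (\<Sum>k\<in>UNIV. Christoffel g x a b k * f x k c d d' e) - (\<Sum>k\<in>UNIV. Christoffel g x a c k * f x b k d d' e)
   - (\<Sum>k\<in>UNIV. Christoffel g x a d k * f x b c k d' e) - (\<Sum>k\<in>UNIV. Christoffel g x a d' k * f x b c d k e)
   + (\<Sum>k\<in>UNIV. Christoffel g x a k e * f x b c d d' k)"
  unfolding nabla_def T14_def by (simp add: eval_nat_numeral)


definition dGm where "dGm g y q a b c = pd q (\<lambda>w. Christoffel g w a b c) y"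
definition ddGm where "ddGm g y r q a b c = pd r (pd q (\<lambda>w. Christoffel g w a b c)) y"
definition cov2 where "cov2 g T y q a b = pd q (\<lambda>z. T z a b) y - (\<Sum>k\<in>UNIV. Christoffel g y q a k * T y k b)
   - (\<Sum>k\<in>UNIV. Christoffel g y q b k * T y a k)"
definition cov3 where "cov3 g F y p b c e = pd p (\<lambda>z. F z b c e) y - (\<Sum>k\<in>UNIV. Christoffel g y p b k * F y k c e)
   - (\<Sum>k\<in>UNIV. Christoffel g y p c k * F y b k e) - (\<Sum>k\<in>UNIV. Christoffel g y p e k * F y b c k)"

context fixes U :: "(real^'n::finite) set" and g :: "real^'n \<Rightarrow> 'n \<Rightarrow> 'n \<Rightarrow> real"
  assumes U: "open U" and met: "riemannian_metric g U"
begin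

lemma sd: "smooth_on f U \<Longrightarrow> y \<in> U \<Longrightarrow> f differentiable (at y)"
  by (rule smooth_diffble[OF U])

lemma conn_at: "y \<in> U \<Longrightarrow> conn (Christoffel g y) (dGm g y) (ddGm g y)"
proof unfold_locales
  fix a b c q r
  assume y: "y \<in> U"
  show "Christoffel g y a b c = Christoffel g y b a c" by (rule Chr_sym[OF U met y])
  have e: "\<And>w. w \<in> U \<Longrightarrow> Christoffel g w a b c = Christoffel g w b a c" by (rule Chr_sym[OF U met])
  show "dGm g y q a b c = dGm g y q b a c" unfolding dGm_def by (rule pd_local[OF U y e])
  show "ddGm g y r q a b c = ddGm g y q r a b c" unfolding ddGm_def
    by (rule schwarz_smooth[OF U y Chr_smooth[OF U met]])
  have e2: "\<And>w. w \<in> U \<Longrightarrow> pd q (\<lambda>w. Christoffel g w a b c) w = pd q (\<lambda>w. Christoffel g w b a c) w"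
    by (rule pd_local[OF U _ e])
  show "ddGm g y r q a b c = ddGm g y r q b a c" unfolding ddGm_def by (rule pd_local[OF U y e2])
qed

lemma Ric_smooth: "smooth_on (\<lambda>y. Ric g y a c) U"
  unfolding Ric_def by (intro smooth_sum[OF U] Riem_smooth[OF U met]) auto

lemma pd_Riem:
  assumes y: "y \<in> U"
  shows "pd q (\<lambda>z. Riem g z a b c d) y = ddGm g y q a b c d - ddGm g y q b a c d
   - (\<Sum>k\<in>UNIV. dGm g y q a c k * Christoffel g y b k d + Christoffel g y a c k * dGm g y q b k d)
   + (\<Sum>k\<in>UNIV. dGm g y q a k d * Christoffel g y b c k + Christoffel g y a k d * dGm g y q b c k)"
proof -
  have dC: "\<And>a b c. (\<lambda>w. Christoffel g w a b c) differentiable (at y)" by (rule sd[OF Chr_smooth[OF U met] y])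
  have dpC: "\<And>q a b c. pd q (\<lambda>w. Christoffel g w a b c) differentiable (at y)"
    by (rule sd[OF smooth_pd[OF U Chr_smooth[OF U met]] y])
  show ?thesis unfolding Riem_def dGm_def ddGm_def
    by (simp add: pd_add pd_diff pd_sum pd_mult dC dpC sum.distrib)
qed

lemma Riem_R: "y \<in> U \<Longrightarrow> Riem g y a b c d = conn.R (Christoffel g y) (dGm g y) a b c d"
  unfolding Riem_def conn.R_def[OF conn_at] dGm_def by simp

lemma cb_real:
  assumes y: "y \<in> U"
  shows "(\<Sum>m\<in>UNIV. nabla g (T13 (Riem g)) y m [b, c, e] [m]) = cov2 g (Ric g) y c b e - cov2 g (Ric g) y b c e"
proof -
  interpret c: conn "Christoffel g y" "dGm g y" "ddGm g y" by (rule conn_at[OF y])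
  have R: "\<And>a b c d. Riem g y a b c d = c.R a b c d" unfolding Riem_def c.R_def dGm_def by simp
  have dR: "\<And>q a b c d. pd q (\<lambda>z. Riem g z a b c d) y = c.dR q a b c d"
    unfolding pd_Riem[OF y] c.dR_def by simp
  have dRiem: "\<And>a b c d. (\<lambda>z. Riem g z a b c d) differentiable (at y)" by (rule sd[OF Riem_smooth[OF U met] y])
  have Rc: "\<And>a c. Ric g y a c = c.Ric a c" unfolding Ric_def c.Ric_def R by simp
  have dRc: "\<And>q a c. pd q (\<lambda>z. Ric g z a c) y = c.dRic q a c"
    unfolding Ric_def c.dRic_def by (simp add: pd_sum dRiem dR)
  have "(\<Sum>m\<in>UNIV. nabla g (T13 (Riem g)) y m [b, c, e] [m]) = c.divR b c e"
    unfolding nabla_T13 c.divR_def R dR by simp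
  moreover have "cov2 g (Ric g) y q a b' = c.cRic q a b'" for q a b'
    unfolding cov2_def c.cRic_def Rc dRc by simp
  ultimately show ?thesis using c.contracted_bianchi by simp
qed

lemma ricci_real:
  assumes x: "x \<in> U"
  shows "(\<Sum>m\<in>UNIV. Ric g x p m * Riem g x b c e m) + (\<Sum>m\<in>UNIV. Ric g x b m * Riem g x c p e m)
     + (\<Sum>m\<in>UNIV. Ric g x c m * Riem g x p b e m)
   = (cov3 g (cov2 g (Ric g)) x p c b e - cov3 g (cov2 g (Ric g)) x c p b e)
   + (cov3 g (cov2 g (Ric g)) x b p c e - cov3 g (cov2 g (Ric g)) x p b c e)
   + (cov3 g (cov2 g (Ric g)) x c b p e - cov3 g (cov2 g (Ric g)) x b c p e)"
proof -
  have cn: "conn (Christoffel g x) (dGm g x) (ddGm g x)" by (rule conn_at[OF x])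
  have "ric (Christoffel g x) (dGm g x) (ddGm g x) (\<lambda>r q a b. pd r (pd q (\<lambda>z. Ric g z a b)) x)"
    unfolding ric_def ric_axioms_def using cn schwarz_smooth[OF U x Ric_smooth] by simp
  then interpret r: ric "Christoffel g x" "dGm g x" "ddGm g x" "Ric g x" "\<lambda>q a b. pd q (\<lambda>z. Ric g z a b) x"
     "\<lambda>r q a b. pd r (pd q (\<lambda>z. Ric g z a b)) x" .
  have R: "\<And>a b c d. Riem g x a b c d = r.R a b c d" unfolding Riem_def r.R_def dGm_def by simp
  have dC: "\<And>a b c. (\<lambda>w. Christoffel g w a b c) differentiable (at x)" by (rule sd[OF Chr_smooth[OF U met] x])
  have dRc: "\<And>a b. (\<lambda>z. Ric g z a b) differentiable (at x)" by (rule sd[OF Ric_smooth x])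
  have dpRc: "\<And>q a b. pd q (\<lambda>z. Ric g z a b) differentiable (at x)" by (rule sd[OF smooth_pd[OF U Ric_smooth] x])
  have cT: "\<And>q a b. cov2 g (Ric g) x q a b = r.cT q a b" unfolding cov2_def r.cT_def by simp
  have dcT: "\<And>p q a b. pd p (\<lambda>z. cov2 g (Ric g) z q a b) x = r.dcT p q a b"
    unfolding cov2_def r.dcT_def dGm_def by (simp add: pd_add pd_diff pd_sum pd_mult dC dRc dpRc)
  have cc: "\<And>p q a b. cov3 g (cov2 g (Ric g)) x p q a b = r.ccT p q a b"
    unfolding cov3_def r.ccT_def cT dcT by simp
  show ?thesis unfolding cc R using r.ricci_cyc[of p c b e] by simp
qed

end


context fixes U :: "(real^'n::finite) set" and g :: "real^'n \<Rightarrow> 'n \<Rightarrow> 'n \<Rightarrow> real"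
  assumes U: "open U" and met: "riemannian_metric g U"
begin

lemma cov3_comb:
  assumes x: "x \<in> U"
    and eq: "\<And>y b c e. y \<in> U \<Longrightarrow> F y b c e = \<alpha> * F1 y b c e + \<beta> * F2 y b c e"
    and d1: "\<And>b c e. (\<lambda>y. F1 y b c e) differentiable (at x)"
    and d2: "\<And>b c e. (\<lambda>y. F2 y b c e) differentiable (at x)"
  shows "cov3 g F x p b c e = \<alpha> * cov3 g F1 x p b c e + \<beta> * cov3 g F2 x p b c e"
proof -
  have "pd p (\<lambda>z. F z b c e) x = pd p (\<lambda>z. \<alpha> * F1 z b c e + \<beta> * F2 z b c e) x"
    by (rule pd_local[OF U x]) (rule eq)
  also have "\<dots> = \<alpha> * pd p (\<lambda>z. F1 z b c e) x + \<beta> * pd p (\<lambda>z. F2 z b c e) x"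
    using d1 d2 by (simp add: pd_add pd_cmult)
  finally have pe: "pd p (\<lambda>z. F z b c e) x = \<alpha> * pd p (\<lambda>z. F1 z b c e) x + \<beta> * pd p (\<lambda>z. F2 z b c e) x" .
  have fx: "\<And>b c e. F x b c e = \<alpha> * F1 x b c e + \<beta> * F2 x b c e" using eq x by blast
  show ?thesis unfolding cov3_def pe fx
    by (simp add: sum.distrib sum_distrib_left ring_distribs mult_ac sum_subtractf)
qed

lemma cov3_perm: "cov3 g (\<lambda>y b c e. N y c b e) x q b c e = cov3 g N x q c b e"
  unfolding cov3_def by simp

lemma DR_smooth: "smooth_on (\<lambda>y. \<Sum>m\<in>UNIV. nabla g (T13 (Riem g)) y m [b, c, e] [m]) U"
  unfolding nabla_T13
  by (intro smooth_sum[OF U] smooth_add[OF U] smooth_diff[OF U] smooth_mult[OF U] smooth_pd[OF U]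
      Riem_smooth[OF U met] Chr_smooth[OF U met]) auto

lemma N_smooth: "smooth_on (\<lambda>y. cov2 g (Ric g) y q a b) U"
  unfolding cov2_def
  by (intro smooth_sum[OF U] smooth_add[OF U] smooth_diff[OF U] smooth_mult[OF U] smooth_pd[OF U]
      Ric_smooth[OF U met] Chr_smooth[OF U met]) auto

end


theorem mainTheorem12:
  fixes U :: "(real^'n::finite) set"
    and g :: "real^'n \<Rightarrow> 'n \<Rightarrow> 'n \<Rightarrow> real"
    and K :: "real^'n \<Rightarrow> 'n \<Rightarrow> 'n \<Rightarrow> 'n \<Rightarrow> 'n \<Rightarrow> real"
    and a :: "real^'n \<Rightarrow> 'n \<Rightarrow> 'n \<Rightarrow> real"
    and \<phi> :: "real^'n \<Rightarrow> real"
    and lam :: "real^'n \<Rightarrow> 'n \<Rightarrow> real"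
    and A B :: real
  assumes U_open: "open U"
    and metric: "riemannian_metric g U"
    and K_smooth: "\<forall>b c d e. smooth_on (\<lambda>x. K x b c d e) U"
    and a_smooth: "\<forall>b c. smooth_on (\<lambda>x. a x b c) U"
    and phi_smooth: "smooth_on \<phi> U"
    and lam_smooth: "\<forall>b. smooth_on (\<lambda>x. lam x b) U"
    and A_nz: "A \<noteq> 0" and B_nz: "B \<noteq> 0"
    and div_K: "\<forall>x\<in>U. \<forall>b c e.
        (\<Sum>m\<in>UNIV. nabla g (T13 K) x m [b, c, e] [m])
        = A * (\<Sum>m\<in>UNIV. nabla g (T13 (Riem g)) x m [b, c, e] [m])
          + B * (a x b e * nabla g (T00 \<phi>) x c [] [] - a x c e * nabla g (T00 \<phi>) x b [] [])"
    and a_sym: "\<forall>x\<in>U. \<forall>b c. a x b c = a x c b"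
    and a_codazzi: "\<forall>x\<in>U. \<forall>b c d. nabla g (T02 a) x b [c, d] [] = nabla g (T02 a) x c [b, d] []"
    and K_recurrent: "\<forall>x\<in>U. \<forall>p b c d e. nabla g (T13 K) x p [b, c, d] [e] = lam x p * K x b c d e"
    and lam_nonzero: "\<exists>x\<in>U. \<exists>p. lam x p \<noteq> 0"
    and lam_closed: "\<forall>x\<in>U. \<forall>p b. nabla g (T01 lam) x p [b] [] = nabla g (T01 lam) x b [p] []"
  shows "\<forall>x\<in>U. \<forall>p b c e.
     (\<Sum>m\<in>UNIV. Ric g x p m * Riem g x b c e m)
     + (\<Sum>m\<in>UNIV. Ric g x b m * Riem g x c p e m)
     + (\<Sum>m\<in>UNIV. Ric g x c m * Riem g x p b e m)
     = (1 / A) * (\<Sum>m\<in>UNIV. nabla g (T14 (Btens g K)) x m [p, b, c, e] [m])"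
  proof (intro ballI allI)
  fix x p b c e assume x: "x \<in> U"
  note U = U_open
  define C where "C = Christoffel g"
  define Dt where "Dt = (\<lambda>y b c e. \<Sum>m\<in>UNIV. nabla g (T13 K) y m [b, c, e] [m])"
  define DRt where "DRt = (\<lambda>y b c e. \<Sum>m\<in>UNIV. nabla g (T13 (Riem g)) y m [b, c, e] [m])"
  define Et where "Et = (\<lambda>y b c e. a y b e * nabla g (T00 \<phi>) y c [] [] - a y c e * nabla g (T00 \<phi>) y b [] [])"
  define N where "N = cov2 g (Ric g)"
  have Ks: "\<And>b c d e. smooth_on (\<lambda>x. K x b c d e) U" using K_smooth by blast
  have ls: "\<And>b. smooth_on (\<lambda>x. lam x b) U" using lam_smooth by blast
  have as: "\<And>b c. smooth_on (\<lambda>x. a x b c) U" using a_smooth by blast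
  have dK: "\<And>b c d e. (\<lambda>x. K x b c d e) differentiable (at x)" by (rule smooth_diffble[OF U Ks x])
  have dl: "\<And>b. (\<lambda>x. lam x b) differentiable (at x)" by (rule smooth_diffble[OF U ls x])
  have rec: "\<And>y q b c d e. y \<in> U \<Longrightarrow> nabla g (T13 K) y q [b, c, d] [e] = lam y q * K y b c d e"
    using K_recurrent by blast
  interpret k: kl "Christoffel g x" "lam x" "\<lambda>q a. pd q (\<lambda>y. lam y a) x" "K x" "\<lambda>q a b c d. pd q (\<lambda>y. K y a b c d) x" .
  have Bt: "\<And>y a b c d e. y \<in> U \<Longrightarrow> Btens g K y a b c d e = lam y a * K y b c d e + lam y b * K y c a d e + lam y c * K y a b d e"
    unfolding Btens_def nabla13_def using rec by simp
  have S1a: "nabla g (T14 (Btens g K)) x m [p, b, c, e] [m] = k.nW m p b c e m + k.nW m b c p e m + k.nW m c p b e m" for m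
  proof -
    have "pd m (\<lambda>y. Btens g K y p b c e m) x = pd m (\<lambda>y. lam y p * K y b c e m + lam y b * K y c p e m + lam y c * K y p b e m) x"
      by (rule pd_local[OF U x]) (rule Bt)
    also have "\<dots> = k.dW m p b c e m + k.dW m b c p e m + k.dW m c p b e m"
      unfolding k.dW_def by (simp add: pd_add pd_mult dK dl)
    finally have pe: "pd m (\<lambda>y. Btens g K y p b c e m) x = k.dW m p b c e m + k.dW m b c p e m + k.dW m c p b e m" .
    have bx: "\<And>a b c d e. Btens g K x a b c d e = k.W a b c d e + k.W b c a d e + k.W c a b d e"
      unfolding k.W_def using Bt[OF x] by simp
    show ?thesis unfolding nabla_T14 pe bx k.nW_def
      by (simp add: sum.distrib ring_distribs)
  qed
  have S1b: "k.nD q b' c' e' = cov3 g Dt x q b' c' e'" for q b' c' e'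
  proof -
    have "pd q (\<lambda>z. Dt z b' c' e') x = pd q (\<lambda>z. \<Sum>m\<in>UNIV. lam z m * K z b' c' e' m) x"
      by (rule pd_local[OF U x]) (simp add: Dt_def rec)
    also have "\<dots> = k.dD q b' c' e'" unfolding k.dD_def by (simp add: pd_sum pd_mult dK dl)
    finally have pe: "pd q (\<lambda>z. Dt z b' c' e') x = k.dD q b' c' e'" .
    have dx: "\<And>b c e. Dt x b c e = k.Dx b c e" unfolding Dt_def k.Dx_def using rec[OF x] by simp
    show ?thesis unfolding cov3_def pe dx k.nD_def by simp
  qed
  have Gs: "\<And>a b c. Christoffel g x a b c = Christoffel g x b a c" by (rule Chr_sym[OF U metric x])
  have kcK: "\<And>q a b c d. k.cK q a b c d = lam x q * K x a b c d"
    unfolding k.cK_def using rec[OF x] unfolding nabla_T13 by simp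
  have knL: "\<And>q a. k.nL q a = k.nL a q"
    unfolding k.nL_def using lam_closed x unfolding nabla_T01 by simp
  have S1: "(\<Sum>m\<in>UNIV. nabla g (T14 (Btens g K)) x m [p, b, c, e] [m])
      = cov3 g Dt x p b c e + cov3 g Dt x b c p e + cov3 g Dt x c p b e"
    unfolding S1a S1b[symmetric] using k.W3[OF Gs kcK knL] by simp
  have dDR: "\<And>b c e. (\<lambda>y. DRt y b c e) differentiable (at x)"
    unfolding DRt_def by (rule smooth_diffble[OF U DR_smooth[OF U metric] x])
  have Es: "\<And>b c e. smooth_on (\<lambda>y. Et y b c e) U"
    unfolding Et_def nabla_T00
    by (intro smooth_diff[OF U] smooth_mult[OF U] smooth_pd[OF U] as phi_smooth)
  have dE: "\<And>b c e. (\<lambda>y. Et y b c e) differentiable (at x)" by (rule smooth_diffble[OF U Es x])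
  have S2: "cov3 g Dt x q b' c' e' = A * cov3 g DRt x q b' c' e' + B * cov3 g Et x q b' c' e'" for q b' c' e'
    by (rule cov3_comb[OF U metric x _ dDR dE]) (use div_K in \<open>simp add: Dt_def DRt_def Et_def\<close>)
  \<comment> \<open>Step 3: Codazzi part vanishes\<close>
  have S3: "cov3 g Et x p b c e + cov3 g Et x b c p e + cov3 g Et x c p b e = 0"
  proof -
    have cd: "cod (Christoffel g x) (a x) (\<lambda>q b c. pd q (\<lambda>y. a y b c) x) (\<lambda>p c. pd p (pd c \<phi>) x)"
    proof unfold_locales
      fix p q r b c
      show "Christoffel g x p q r = Christoffel g x q p r" by (rule Gs)
      show "a x p q = a x q p" using a_sym x by blast
      show "pd p (pd q \<phi>) x = pd q (pd p \<phi>) x" by (rule schwarz_smooth[OF U x phi_smooth])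
      show "pd q (\<lambda>y. a y b c) x - (\<Sum>k\<in>UNIV. Christoffel g x q b k * a x k c) - (\<Sum>k\<in>UNIV. Christoffel g x q c k * a x b k)
          = pd b (\<lambda>y. a y q c) x - (\<Sum>k\<in>UNIV. Christoffel g x b q k * a x k c) - (\<Sum>k\<in>UNIV. Christoffel g x b c k * a x q k)"
        using a_codazzi x unfolding nabla_T02 by blast
    qed
    interpret d: cod "Christoffel g x" "a x" "\<lambda>q b c. pd q (\<lambda>y. a y b c) x" "\<lambda>k. pd k \<phi> x" "\<lambda>p c. pd p (pd c \<phi>) x"
      by (rule cd)
    have da: "\<And>b c. (\<lambda>y. a y b c) differentiable (at x)" by (rule smooth_diffble[OF U as x])
    have dp: "\<And>c. pd c \<phi> differentiable (at x)" by (rule smooth_diffble[OF U smooth_pd[OF U phi_smooth] x])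
    have ce: "cov3 g Et x q b' c' e' = d.nE q b' c' e'" for q b' c' e'
      unfolding cov3_def d.nE_def d.dE_def d.E_def Et_def nabla_T00
      by (simp add: pd_diff pd_mult da dp)
    show ?thesis unfolding ce by (rule d.nE_cyc)
  qed
  \<comment> \<open>Step 4: contracted Bianchi\<close>
  have dN: "\<And>q a b. (\<lambda>y. N y q a b) differentiable (at x)"
    unfolding N_def by (rule smooth_diffble[OF U N_smooth[OF U metric] x])
  have S4: "cov3 g DRt x q b' c' e' = cov3 g N x q c' b' e' - cov3 g N x q b' c' e'" for q b' c' e'
  proof -
    have "cov3 g DRt x q b' c' e' = 1 * cov3 g (\<lambda>y b c e. N y c b e) x q b' c' e' + (-1) * cov3 g N x q b' c' e'"
      by (rule cov3_comb[OF U metric x]) (auto simp: DRt_def N_def cb_real[OF U metric] dN[unfolded N_def])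
    then show ?thesis using cov3_perm[OF U metric, of N x q b' c' e'] by simp
  qed
  \<comment> \<open>Step 5: Ricci identities\<close>
  note S5 = ricci_real[OF U metric x, of p b c e, folded N_def]
  have main: "(\<Sum>m\<in>UNIV. nabla g (T14 (Btens g K)) x m [p, b, c, e] [m]) =
     A * ((\<Sum>m\<in>UNIV. Ric g x p m * Riem g x b c e m) + (\<Sum>m\<in>UNIV. Ric g x b m * Riem g x c p e m)
     + (\<Sum>m\<in>UNIV. Ric g x c m * Riem g x p b e m))"
  proof -
    have S3': "B * cov3 g Et x p b c e + B * cov3 g Et x b c p e + B * cov3 g Et x c p b e = 0"
      using S3 by (simp add: ring_distribs[symmetric])
    show ?thesis unfolding S1 S2 S4 S5 by (simp only: ring_distribs) (use S3' in linarith)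
  qed
  show "(\<Sum>m\<in>UNIV. Ric g x p m * Riem g x b c e m) + (\<Sum>m\<in>UNIV. Ric g x b m * Riem g x c p e m)
     + (\<Sum>m\<in>UNIV. Ric g x c m * Riem g x p b e m)
     = (1 / A) * (\<Sum>m\<in>UNIV. nabla g (T14 (Btens g K)) x m [p, b, c, e] [m])"
    unfolding main using A_nz by simp
qed


end
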